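(* Let $\mathcal{X}$ be a projective, nonsingular, geometrically irreducible curve of genus $g$ over $\mathbb{F}_q$. Let $\mathcal{P}$ be a proper subset of $\mathcal{X}(\mathbb{F}_q)$ and $D=\sum_{P\in\mathcal{P}}P$. Let $G,H,J$ be divisors on $\mathcal{X}$ of degree at most $\deg(D)-1$ with $(\mathrm{supp}(G)\cup\mathrm{supp}(H)\cup\mathrm{supp}(J))\cap\mathrm{supp}(D)=\varnothing$. Let $f\in\mathscr{L}(J)$ be nonzero and suppose that (i) $\ell\big(\gcd(G,H-(f))\big)=0$, and (ii) $\ell\big(\mathrm{lcm}(G,H-(f))-D\big)=0$. Then $C(D,G)\cap\big(\mathrm{ev}_D(f)*C(D,H)\big)=\{0\}$.
   Context: $(f)$ is the principal divisor of $f$; $\gcd$ and $\mathrm{lcm}$ of divisors are coefficientwise min and max. $\mathscr{L}(E)=\{f\in\mathbb{F}_q(\mathcal{X})^*:(f)+E\ge0\}\cup\{0\}$, $\ell(E)=\dim\mathscr{L}(E)$. Writing $D=P_1+\dots+P_n$, $\mathrm{ev}_D(f)=(f(P_1),\dots,f(P_n))$ and, for $E$ with support disjoint from $\mathrm{supp}(D)$, $C(D,E)=\{\mathrm{ev}_D(h):h\in\mathscr{L}(E)\}$. $*$ is the componentwise product and $v*C'=\{v*c:c\in C'\}$. *)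

theory Defs
  imports "HOL-Computational_Algebra.Polynomial"
begin

text \<open>
  Model: the curve X over F_q is represented by its function field F = F_q(X),
  which is the whole type 'f (a field), with constant field K = F_q (a finite
  subfield of 'f).  Points of X correspond to places of F/K; a place is
  represented by its valuation ring R.  Rational points X(F_q) are the places
  of degree one.
\<close>

definition subfield :: "'f::field set \<Rightarrow> bool" where
  "subfield K \<longleftrightarrow> 0 \<in> K \<and> 1 \<in> K \<and>
     (\<forall>a\<in>K. \<forall>b\<in>K. a + b \<in> K \<and> a * b \<in> K) \<and>
     (\<forall>a\<in>K. - a \<in> K) \<and> (\<forall>a\<in>K. a \<noteq> 0 \<longrightarrow> inverse a \<in> K)"

definition algebraic_over :: "'f::field set \<Rightarrow> 'f \<Rightarrow> bool" where
  "algebraic_over S y \<longleftrightarrow> (\<exists>p::'f poly. p \<noteq> 0 \<and> (\<forall>i. coeff p i \<in> S) \<and> poly p y = 0)"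

definition field_adj :: "'f::field set \<Rightarrow> 'f \<Rightarrow> 'f set" where
  "field_adj S x = \<Inter>{L. subfield L \<and> S \<subseteq> L \<and> x \<in> L}"

definition finite_dim_over :: "'f::field set \<Rightarrow> bool" where
  "finite_dim_over S \<longleftrightarrow> (\<exists>B. finite B \<and>
     (\<forall>y. \<exists>c. (\<forall>b\<in>B. c b \<in> S) \<and> y = (\<Sum>b\<in>B. c b * b)))"

text \<open>'f is an algebraic function field of one variable over the finite field K
  with full constant field K (i.e. the function field of a projective, nonsingular,
  geometrically irreducible curve over K).\<close>
definition function_field :: "'f::field set \<Rightarrow> bool" where
  "function_field K \<longleftrightarrow> subfield K \<and> finite K \<and>
     (\<exists>x. \<not> algebraic_over K x \<and> finite_dim_over (field_adj K x)) \<and>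
     (\<forall>y. algebraic_over K y \<longrightarrow> y \<in> K)"

definition valuation_ring :: "'f::field set \<Rightarrow> 'f set \<Rightarrow> bool" where
  "valuation_ring K R \<longleftrightarrow> K \<subseteq> R \<and> R \<noteq> UNIV \<and>
     (\<forall>a\<in>R. \<forall>b\<in>R. a + b \<in> R \<and> a * b \<in> R \<and> - a \<in> R) \<and>
     (\<forall>z. z \<noteq> 0 \<longrightarrow> z \<in> R \<or> inverse z \<in> R)"

definition place_ideal :: "'f::field set \<Rightarrow> 'f set" where
  "place_ideal R = {z \<in> R. z = 0 \<or> inverse z \<notin> R}"

definition places :: "'f::field set \<Rightarrow> 'f set set" where
  "places K = {R. valuation_ring K R}"

text \<open>Normalized discrete valuation v_P (the value at 0 is irrelevant, it is
  never used).\<close>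
definition val :: "'f::field set \<Rightarrow> 'f \<Rightarrow> int" where
  "val R z = (if z = 0 then 0 else
     (THE n::int. \<exists>t\<in>R. place_ideal R = {t * y | y. y \<in> R} \<and>
        z * t powi (- n) \<in> R \<and> inverse (z * t powi (- n)) \<in> R))"

definition residue_field :: "'f::field set \<Rightarrow> 'f set set" where
  "residue_field R = (\<lambda>z. {z + p | p. p \<in> place_ideal R}) ` R"

text \<open>Degree of a place: [R/P : K], expressed via |R/P| = |K|^deg.\<close>
definition deg_place :: "'f::field set \<Rightarrow> 'f set \<Rightarrow> nat" where
  "deg_place K R = (THE n. card (residue_field R) = card K ^ n)"

definition rational_places :: "'f::field set \<Rightarrow> 'f set set" where
  "rational_places K = {R \<in> places K. deg_place K R = 1}"

type_synonym 'f divisor = "'f set \<Rightarrow> int"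

definition is_divisor :: "'f::field set \<Rightarrow> 'f divisor \<Rightarrow> bool" where
  "is_divisor K E \<longleftrightarrow> finite {R. E R \<noteq> 0} \<and> (\<forall>R. E R \<noteq> 0 \<longrightarrow> R \<in> places K)"

definition supp :: "'f divisor \<Rightarrow> 'f set set" where
  "supp E = {R. E R \<noteq> 0}"

definition deg_div :: "'f::field set \<Rightarrow> 'f divisor \<Rightarrow> int" where
  "deg_div K E = (\<Sum>R\<in>supp E. E R * int (deg_place K R))"

definition sum_places :: "'f set set \<Rightarrow> 'f divisor" where
  "sum_places Ps = (\<lambda>R. if R \<in> Ps then 1 else 0)"

definition principal_div :: "'f::field set \<Rightarrow> 'f \<Rightarrow> 'f divisor" where
  "principal_div K f = (\<lambda>R. if R \<in> places K then val R f else 0)"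

definition gcd_div :: "'f divisor \<Rightarrow> 'f divisor \<Rightarrow> 'f divisor" where
  "gcd_div E1 E2 = (\<lambda>R. min (E1 R) (E2 R))"

definition lcm_div :: "'f divisor \<Rightarrow> 'f divisor \<Rightarrow> 'f divisor" where
  "lcm_div E1 E2 = (\<lambda>R. max (E1 R) (E2 R))"

definition Lspace :: "'f::field set \<Rightarrow> 'f divisor \<Rightarrow> 'f set" where
  "Lspace K E = {f. f \<noteq> 0 \<and> (\<forall>R\<in>places K. principal_div K f R + E R \<ge> 0)} \<union> {0}"

text \<open>l(E) = dim_K L(E), expressed via |L(E)| = |K|^l(E).\<close>
definition ell :: "'f::field set \<Rightarrow> 'f divisor \<Rightarrow> nat" where
  "ell K E = (THE n. card (Lspace K E) = card K ^ n)"

definition eval_at :: "'f::field set \<Rightarrow> 'f set \<Rightarrow> 'f \<Rightarrow> 'f" where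
  "eval_at K R f = (THE c. c \<in> K \<and> f - c \<in> place_ideal R)"

text \<open>ev_D, with vectors indexed by the places in Ps (extended by 0 outside).\<close>
definition ev_D :: "'f::field set \<Rightarrow> 'f set set \<Rightarrow> 'f \<Rightarrow> ('f set \<Rightarrow> 'f)" where
  "ev_D K Ps f = (\<lambda>R. if R \<in> Ps then eval_at K R f else 0)"

definition AG_code :: "'f::field set \<Rightarrow> 'f set set \<Rightarrow> 'f divisor \<Rightarrow> ('f set \<Rightarrow> 'f) set" where
  "AG_code K Ps E = ev_D K Ps ` Lspace K E"

definition cw_mult_code :: "('a \<Rightarrow> 'f::field) \<Rightarrow> ('a \<Rightarrow> 'f) set \<Rightarrow> ('a \<Rightarrow> 'f) set" where
  "cw_mult_code v C = (\<lambda>c. (\<lambda>i. v i * c i)) ` C"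

end

theory Submission
  imports Defs "HOL-Library.FuncSet"
begin


lemma sf_0: "subfield K \<Longrightarrow> 0 \<in> K" by (simp add: subfield_def)
lemma sf_1: "subfield K \<Longrightarrow> 1 \<in> K" by (simp add: subfield_def)
lemma sf_add: "subfield K \<Longrightarrow> a \<in> K \<Longrightarrow> b \<in> K \<Longrightarrow> a + b \<in> K" by (simp add: subfield_def)
lemma sf_mult: "subfield K \<Longrightarrow> a \<in> K \<Longrightarrow> b \<in> K \<Longrightarrow> a * b \<in> K" by (simp add: subfield_def)
lemma sf_uminus: "subfield K \<Longrightarrow> a \<in> K \<Longrightarrow> - a \<in> K" by (simp add: subfield_def)
lemma sf_inverse: "subfield K \<Longrightarrow> a \<in> K \<Longrightarrow> inverse a \<in> K"
  by (cases "a = 0") (auto simp: subfield_def)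
lemma sf_diff: "subfield K \<Longrightarrow> a \<in> K \<Longrightarrow> b \<in> K \<Longrightarrow> a - b \<in> K"
  using sf_add[of K a "-b"] sf_uminus[of K b] by simp
lemma sf_divide: "subfield K \<Longrightarrow> a \<in> K \<Longrightarrow> b \<in> K \<Longrightarrow> a / b \<in> K"
  using sf_mult[of K a "inverse b"] sf_inverse[of K b] by (simp add: divide_inverse)

lemma sum_closed:
  assumes "0 \<in> A" "\<And>a b. a \<in> A \<Longrightarrow> b \<in> A \<Longrightarrow> a + b \<in> A" "\<And>i. i \<in> I \<Longrightarrow> f i \<in> A"
  shows "sum f I \<in> A"
proof (cases "finite I")
  case True
  then show ?thesis using assms(3)
    by (induction I rule: finite_induct) (auto intro: assms(1,2))
qed (simp add: assms)

lemma sf_sum: "subfield K \<Longrightarrow> (\<And>i. i \<in> I \<Longrightarrow> f i \<in> K) \<Longrightarrow> sum f I \<in> K"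
  by (rule sum_closed) (auto intro: sf_0 sf_add)

lemma sf_power: "subfield K \<Longrightarrow> a \<in> K \<Longrightarrow> a ^ n \<in> K"
  by (induction n) (auto intro: sf_1 sf_mult)

lemma sf_prod: "subfield K \<Longrightarrow> (\<And>i. i \<in> I \<Longrightarrow> f i \<in> K) \<Longrightarrow> prod f I \<in> K"
proof (cases "finite I")
  case True
  assume "subfield K" "\<And>i. i \<in> I \<Longrightarrow> f i \<in> K"
  with True show ?thesis by (induction I rule: finite_induct) (auto intro: sf_1 sf_mult)
qed (simp add: sf_1)

lemma subfield_UNIV: "subfield (UNIV :: 'f::field set)"
  by (simp add: subfield_def)

lemma subfield_Inter: "(\<And>L. L \<in> \<LL> \<Longrightarrow> subfield L) \<Longrightarrow> subfield (\<Inter>\<LL>)"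
  by (simp add: subfield_def)

lemma field_adj_subfield: "subfield (field_adj K x)"
  unfolding field_adj_def by (rule subfield_Inter) auto

lemma field_adj_K: "K \<subseteq> field_adj K x"
  unfolding field_adj_def by auto

lemma field_adj_x: "x \<in> field_adj K x"
  unfolding field_adj_def by auto

lemma field_adj_min: "subfield L \<Longrightarrow> K \<subseteq> L \<Longrightarrow> x \<in> L \<Longrightarrow> field_adj K x \<subseteq> L"
  unfolding field_adj_def by auto

section \<open>Polynomials with coefficients in a set\<close>

definition pc :: "'f::field set \<Rightarrow> 'f poly \<Rightarrow> bool" where
  "pc A p \<longleftrightarrow> (\<forall>i. coeff p i \<in> A)"

lemma pc_coeff: "pc A p \<Longrightarrow> coeff p i \<in> A" by (simp add: pc_def)

lemma pc_0: "0 \<in> A \<Longrightarrow> pc A 0" by (simp add: pc_def)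

lemma pc_pCons: "pc A (pCons a p) \<longleftrightarrow> a \<in> A \<and> pc A p"
  unfolding pc_def by (auto simp: coeff_pCons split: nat.splits)

lemma pc_const: "0 \<in> A \<Longrightarrow> a \<in> A \<Longrightarrow> pc A [:a:]"
  by (simp add: pc_pCons pc_0)

lemma pc_add: "(\<And>a b. a \<in> A \<Longrightarrow> b \<in> A \<Longrightarrow> a + b \<in> A) \<Longrightarrow> pc A p \<Longrightarrow> pc A q \<Longrightarrow> pc A (p + q)"
  by (simp add: pc_def)

lemma pc_uminus: "(\<And>a. a \<in> A \<Longrightarrow> - a \<in> A) \<Longrightarrow> pc A p \<Longrightarrow> pc A (- p)"
  by (simp add: pc_def)

lemma pc_diff: "(\<And>a b. a \<in> A \<Longrightarrow> b \<in> A \<Longrightarrow> a - b \<in> A) \<Longrightarrow> pc A p \<Longrightarrow> pc A q \<Longrightarrow> pc A (p - q)"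
  by (simp add: pc_def)

lemma pc_mult:
  assumes "0 \<in> C" "\<And>a b. a \<in> C \<Longrightarrow> b \<in> C \<Longrightarrow> a + b \<in> C" "\<And>a b. a \<in> A \<Longrightarrow> b \<in> B \<Longrightarrow> a * b \<in> C"
    "pc A p" "pc B q"
  shows "pc C (p * q)"
  unfolding pc_def coeff_mult
  by (intro allI sum_closed assms(1,2)) (auto intro: assms(3) pc_coeff[OF assms(4)] pc_coeff[OF assms(5)])

lemma pc_smult: "(\<And>b. b \<in> B \<Longrightarrow> a * b \<in> C) \<Longrightarrow> pc B p \<Longrightarrow> pc C (smult a p)"
  by (simp add: pc_def)

lemma pc_monom: "0 \<in> A \<Longrightarrow> a \<in> A \<Longrightarrow> pc A (monom a n)"
  by (simp add: pc_def coeff_monom)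

lemma pc_mono: "A \<subseteq> B \<Longrightarrow> pc A p \<Longrightarrow> pc B p"
  by (auto simp: pc_def)

lemma poly_closed:
  assumes "0 \<in> A" "\<And>a b. a \<in> A \<Longrightarrow> b \<in> A \<Longrightarrow> a + b \<in> A" "\<And>a. a \<in> A \<Longrightarrow> x * a \<in> A" "pc A p"
  shows "poly p x \<in> A"
  using assms(4)
proof (induction p)
  case 0
  then show ?case using assms(1) by simp
next
  case (pCons a p)
  then show ?case using assms by (auto simp: pc_pCons)
qed

lemma sf_poly: "subfield K \<Longrightarrow> pc K p \<Longrightarrow> x \<in> K \<Longrightarrow> poly p x \<in> K"
  by (rule poly_closed) (auto intro: sf_0 sf_add sf_mult)

lemma sf_pc_add: "subfield K \<Longrightarrow> pc K p \<Longrightarrow> pc K q \<Longrightarrow> pc K (p + q)"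
  by (rule pc_add) (auto intro: sf_add)
lemma sf_pc_diff: "subfield K \<Longrightarrow> pc K p \<Longrightarrow> pc K q \<Longrightarrow> pc K (p - q)"
  by (rule pc_diff) (auto intro: sf_diff)
lemma sf_pc_mult: "subfield K \<Longrightarrow> pc K p \<Longrightarrow> pc K q \<Longrightarrow> pc K (p * q)"
  by (rule pc_mult) (auto intro: sf_0 sf_add sf_mult)
lemma sf_pc_smult: "subfield K \<Longrightarrow> a \<in> K \<Longrightarrow> pc K p \<Longrightarrow> pc K (smult a p)"
  by (rule pc_smult) (auto intro: sf_mult)
lemma sf_pc_const: "subfield K \<Longrightarrow> a \<in> K \<Longrightarrow> pc K [:a:]"
  by (rule pc_const) (auto intro: sf_0)
lemma sf_pc_monom: "subfield K \<Longrightarrow> a \<in> K \<Longrightarrow> pc K (monom a n)"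
  by (rule pc_monom) (auto intro: sf_0)
lemma sf_pc_prod: "subfield K \<Longrightarrow> (\<And>i. i \<in> I \<Longrightarrow> pc K (f i)) \<Longrightarrow> pc K (prod f I)"
proof (cases "finite I")
  case True
  assume "subfield K" "\<And>i. i \<in> I \<Longrightarrow> pc K (f i)"
  with True show ?thesis
    by (induction I rule: finite_induct) (auto intro: sf_pc_mult sf_pc_const sf_1 simp: one_pCons)
qed (auto simp: one_pCons intro: sf_pc_const sf_1)

section \<open>The field of rational expressions\<close>

definition Quot :: "'f::field set \<Rightarrow> 'f \<Rightarrow> 'f set" where
  "Quot K x = {poly p x / poly q x | p q. pc K p \<and> pc K q \<and> poly q x \<noteq> 0}"

lemma subfield_Quot:
  assumes K: "subfield K"
  shows "subfield (Quot K x)"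
proof -
  have c: "pc K [:a:]" if "a \<in> K" for a by (rule sf_pc_const[OF K that])
  have 0: "0 \<in> Quot K x" unfolding Quot_def
    by (rule CollectI, rule exI[of _ 0], rule exI[of _ 1]) (simp add: pc_0[OF sf_0[OF K]] sf_1[OF K] one_pCons c)
  have 1: "1 \<in> Quot K x" unfolding Quot_def
    by (rule CollectI, rule exI[of _ 1], rule exI[of _ 1]) (auto simp: c sf_1[OF K] one_pCons)
  have add: "a + b \<in> Quot K x" if "a \<in> Quot K x" "b \<in> Quot K x" for a b
  proof -
    from that obtain p q p' q' where *: "a = poly p x / poly q x" "pc K p" "pc K q" "poly q x \<noteq> 0"
      "b = poly p' x / poly q' x" "pc K p'" "pc K q'" "poly q' x \<noteq> 0" unfolding Quot_def by blast
    then have "a + b = poly (p * q' + p' * q) x / poly (q * q') x"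
      by (simp add: add_frac_eq algebra_simps)
    moreover have "pc K (p * q' + p' * q)" "pc K (q * q')" "poly (q * q') x \<noteq> 0"
      using * K by (auto intro!: sf_pc_add sf_pc_mult)
    ultimately show ?thesis unfolding Quot_def by blast
  qed
  have mult: "a * b \<in> Quot K x" if "a \<in> Quot K x" "b \<in> Quot K x" for a b
  proof -
    from that obtain p q p' q' where *: "a = poly p x / poly q x" "pc K p" "pc K q" "poly q x \<noteq> 0"
      "b = poly p' x / poly q' x" "pc K p'" "pc K q'" "poly q' x \<noteq> 0" unfolding Quot_def by blast
    then have "a * b = poly (p * p') x / poly (q * q') x"
      by simp
    moreover have "pc K (p * p')" "pc K (q * q')" "poly (q * q') x \<noteq> 0"
      using * K by (auto intro!: sf_pc_mult)
    ultimately show ?thesis unfolding Quot_def by blast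
  qed
  have neg: "- a \<in> Quot K x" if "a \<in> Quot K x" for a
  proof -
    from that obtain p q where *: "a = poly p x / poly q x" "pc K p" "pc K q" "poly q x \<noteq> 0"
      unfolding Quot_def by blast
    then have "- a = poly (- p) x / poly q x" by simp
    moreover have "pc K (- p)" using * K by (auto intro!: pc_uminus sf_uminus)
    ultimately show ?thesis using * unfolding Quot_def by blast
  qed
  have inv: "inverse a \<in> Quot K x" if "a \<in> Quot K x" "a \<noteq> 0" for a
  proof -
    from that obtain p q where *: "a = poly p x / poly q x" "pc K p" "pc K q" "poly q x \<noteq> 0"
      unfolding Quot_def by blast
    then have "inverse a = poly q x / poly p x" "poly p x \<noteq> 0" using that by auto
    then show ?thesis using * unfolding Quot_def by blast
  qed
  show ?thesis unfolding subfield_def using 0 1 add mult neg inv by simp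
qed

lemma K_sub_Quot: "subfield K \<Longrightarrow> K \<subseteq> Quot K x"
proof
  fix a assume K: "subfield K" and a: "a \<in> K"
  have "a = poly [:a:] x / poly 1 x" by simp
  moreover have "pc K [:a:]" "pc K 1" using K a by (auto intro: sf_pc_const sf_1 simp: one_pCons)
  ultimately show "a \<in> Quot K x" unfolding Quot_def by fastforce
qed

lemma x_in_Quot: "subfield K \<Longrightarrow> x \<in> Quot K x"
proof -
  assume K: "subfield K"
  have "x = poly [:0, 1:] x / poly 1 x" by simp
  moreover have "pc K [:0, 1:]" "pc K 1" using K by (simp_all add: pc_pCons sf_0[OF K] sf_1[OF K] pc_0[OF sf_0[OF K]] one_pCons)
  ultimately show "x \<in> Quot K x" unfolding Quot_def by fastforce
qed

lemma field_adj_Quot: "subfield K \<Longrightarrow> field_adj K x \<subseteq> Quot K x"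
  by (meson field_adj_min subfield_Quot K_sub_Quot x_in_Quot)

section \<open>Spans over a subfield and the exchange lemma\<close>

definition spn :: "'f::field set \<Rightarrow> 'f set \<Rightarrow> 'f set" where
  "spn L B = {\<Sum>b\<in>B. c b * b | c. \<forall>b\<in>B. c b \<in> L}"

lemma spn_0: "subfield L \<Longrightarrow> 0 \<in> spn L B"
  unfolding spn_def by (rule CollectI, rule exI[of _ "\<lambda>_. 0"]) (simp add: sf_0)

lemma spn_add: "v \<in> spn L B \<Longrightarrow> w \<in> spn L B \<Longrightarrow> subfield L \<Longrightarrow> v + w \<in> spn L B"
proof -
  assume "v \<in> spn L B" "w \<in> spn L B" and L: "subfield L"
  then obtain c d where "v = (\<Sum>b\<in>B. c b * b)" "\<forall>b\<in>B. c b \<in> L" "w = (\<Sum>b\<in>B. d b * b)" "\<forall>b\<in>B. d b \<in> L"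
    unfolding spn_def by blast
  then have "v + w = (\<Sum>b\<in>B. (c b + d b) * b)" "\<forall>b\<in>B. c b + d b \<in> L"
    by (auto simp: sum.distrib distrib_right intro: sf_add[OF L])
  then show ?thesis unfolding spn_def mem_Collect_eq by (intro exI[where x="\<lambda>b. c b + d b"]) simp
qed

lemma spn_smult: "v \<in> spn L B \<Longrightarrow> a \<in> L \<Longrightarrow> subfield L \<Longrightarrow> a * v \<in> spn L B"
proof -
  assume "v \<in> spn L B" "a \<in> L" and L: "subfield L"
  then obtain c where "v = (\<Sum>b\<in>B. c b * b)" "\<forall>b\<in>B. c b \<in> L"
    unfolding spn_def by blast
  then have "a * v = (\<Sum>b\<in>B. (a * c b) * b)" "\<forall>b\<in>B. a * c b \<in> L"
    using \<open>a \<in> L\<close> by (auto simp: sum_distrib_left mult.assoc intro: sf_mult[OF L])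
  then show ?thesis unfolding spn_def mem_Collect_eq by (intro exI[where x="\<lambda>b. a * c b"]) simp
qed

lemma spn_uminus: "v \<in> spn L B \<Longrightarrow> subfield L \<Longrightarrow> - v \<in> spn L B"
  using spn_smult[of v L B "-1"] sf_uminus[OF _ sf_1] by auto

lemma spn_diff: "v \<in> spn L B \<Longrightarrow> w \<in> spn L B \<Longrightarrow> subfield L \<Longrightarrow> v - w \<in> spn L B"
  using spn_add[of v L B "- w"] spn_uminus[of w L B] by simp

lemma spn_sum: "subfield L \<Longrightarrow> (\<And>i. i \<in> I \<Longrightarrow> f i \<in> spn L B) \<Longrightarrow> sum f I \<in> spn L B"
  by (rule sum_closed) (auto intro: spn_0 spn_add)

lemma spn_base: "finite B \<Longrightarrow> b \<in> B \<Longrightarrow> subfield L \<Longrightarrow> b \<in> spn L B"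
proof -
  assume B: "finite B" "b \<in> B" and L: "subfield L"
  have "(\<Sum>b'\<in>B. (if b' = b then 1 else 0) * b') = (\<Sum>b'\<in>B. if b' = b then b' else 0)"
    by (rule sum.cong) auto
  also have "\<dots> = b" using B by (simp add: sum.delta')
  finally have "(\<Sum>b'\<in>B. (if b' = b then 1 else 0) * b') = b" .
  moreover have "\<forall>b'\<in>B. (if b' = b then 1 else 0) \<in> L" using L by (auto intro: sf_0 sf_1)
  ultimately show ?thesis unfolding spn_def mem_Collect_eq
    by (intro exI[where x="\<lambda>b'. if b' = b then 1 else 0"]) simp
qed

lemma spn_mono_field: "L \<subseteq> L' \<Longrightarrow> spn L B \<subseteq> spn L' B"
  unfolding spn_def by blast

lemma spn_insert:
  assumes "v \<in> spn L (insert b B)" "b \<notin> B" "finite B"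
  shows "\<exists>a\<in>L. \<exists>w\<in>spn L B. v = a * b + w"
proof -
  obtain c where "v = (\<Sum>x\<in>insert b B. c x * x)" "\<forall>x\<in>insert b B. c x \<in> L"
    using assms(1) unfolding spn_def by blast
  then have "v = c b * b + (\<Sum>x\<in>B. c x * x)" "c b \<in> L" "(\<Sum>x\<in>B. c x * x) \<in> spn L B"
    using assms(2,3) unfolding spn_def by auto
  then show ?thesis by blast
qed

lemma steinitz:
  assumes L: "subfield L" and B: "finite B"
  shows "finite I \<Longrightarrow> card I > card B \<Longrightarrow> (\<forall>i\<in>I. ws i \<in> spn L B) \<Longrightarrow>
    \<exists>c. (\<forall>i\<in>I. c i \<in> L) \<and> (\<exists>i\<in>I. c i \<noteq> 0) \<and> (\<Sum>i\<in>I. c i * ws i) = 0"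
  using B
proof (induction B arbitrary: I ws rule: finite_induct)
  case empty
  then have "\<forall>i\<in>I. ws i = 0" by (auto simp: spn_def)
  moreover obtain i where "i \<in> I" using empty by fastforce
  ultimately show ?case using L by (intro exI[of _ "\<lambda>_. 1"]) (auto intro: sf_1)
next
  case (insert b B)
  have "\<forall>i\<in>I. \<exists>a\<in>L. \<exists>w\<in>spn L B. ws i = a * b + w"
    using insert spn_insert by metis
  then obtain a w where aw: "\<And>i. i \<in> I \<Longrightarrow> a i \<in> L \<and> w i \<in> spn L B \<and> ws i = a i * b + w i"
    by metis
  show ?case
  proof (cases "\<forall>i\<in>I. a i = 0")
    case True
    then have "\<forall>i\<in>I. ws i \<in> spn L B" using aw by auto
    moreover have "card I > card B" using insert by simp
    ultimately show ?thesis using insert.IH[of I ws] insert.prems by blast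
  next
    case False
    then obtain k where k: "k \<in> I" "a k \<noteq> 0" by blast
    define I' where "I' = I - {k}"
    define ws' where "ws' i = w i - (a i / a k) * w k" for i
    have fI': "finite I'" using insert I'_def by simp
    have cI': "card I' > card B" using insert k unfolding I'_def by (simp add: card_Diff_singleton)
    have "\<forall>i\<in>I'. ws' i \<in> spn L B"
    proof
      fix i assume i: "i \<in> I'"
      then have "a i / a k \<in> L" using aw k L I'_def by (auto intro: sf_divide)
      moreover have "w k \<in> spn L B" "w i \<in> spn L B" using aw k i I'_def by auto
      ultimately have "(a i / a k) * w k \<in> spn L B" using spn_smult L by blast
      then show "ws' i \<in> spn L B" unfolding ws'_def
        by (rule spn_diff[OF \<open>w i \<in> spn L B\<close> _ L])
    qed
    then obtain c' where c': "\<forall>i\<in>I'. c' i \<in> L" "\<exists>i\<in>I'. c' i \<noteq> 0" "(\<Sum>i\<in>I'. c' i * ws' i) = 0"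
      using insert.IH[OF fI' cI'] by blast
    define s where "s = (\<Sum>i\<in>I'. c' i * a i)"
    define c where "c i = (if i = k then - s / a k else c' i)" for i
    have sL: "s \<in> L" unfolding s_def using c' aw L I'_def by (auto intro!: sf_sum sf_mult)
    have cL: "\<forall>i\<in>I. c i \<in> L" unfolding c_def using c' sL L aw k I'_def
      by (auto intro!: sf_divide sf_uminus)
    have cnz: "\<exists>i\<in>I. c i \<noteq> 0" using c' unfolding c_def I'_def by auto
    have e1: "(\<Sum>i\<in>I'. c' i * ws' i) = (\<Sum>i\<in>I'. c' i * w i) - s / a k * w k"
      unfolding ws'_def s_def by (simp add: right_diff_distrib sum_subtractf sum_distrib_left sum_distrib_right sum_divide_distrib mult_ac)
    have "(\<Sum>i\<in>I. c i * ws i) = c k * ws k + (\<Sum>i\<in>I'. c i * ws i)"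
      using k insert(4) I'_def by (simp add: sum.remove)
    also have "(\<Sum>i\<in>I'. c i * ws i) = (\<Sum>i\<in>I'. c' i * (a i * b + w i))"
      by (rule sum.cong) (auto simp: c_def I'_def aw)
    also have "\<dots> = s * b + (\<Sum>i\<in>I'. c' i * w i)"
      unfolding s_def by (simp add: algebra_simps sum.distrib sum_distrib_right sum_distrib_left)
    also have "c k * ws k = - s / a k * (a k * b + w k)" using aw k c_def by simp
    finally have "(\<Sum>i\<in>I. c i * ws i) = (\<Sum>i\<in>I'. c' i * w i) - s / a k * w k"
      using k by (simp add: field_simps)
    then have "(\<Sum>i\<in>I. c i * ws i) = 0" using e1 c' by simp
    then show ?thesis using cL cnz by blast
  qed
qed



definition isunit :: "'f::field set \<Rightarrow> 'f \<Rightarrow> bool" where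
  "isunit R z \<longleftrightarrow> z \<in> R \<and> z \<noteq> 0 \<and> inverse z \<in> R"

locale ffield =
  fixes K :: "'f::field set"
  assumes ff: "function_field K"
begin

lemma K_sf: "subfield K" using ff by (simp add: function_field_def)
lemma K_fin: "finite K" using ff by (simp add: function_field_def)
lemma K_alg: "algebraic_over K z \<Longrightarrow> z \<in> K" using ff by (simp add: function_field_def)
lemma pc_alg: "pc K p \<Longrightarrow> poly p z = 0 \<Longrightarrow> p \<noteq> 0 \<Longrightarrow> z \<in> K"
  by (rule K_alg) (auto simp: algebraic_over_def pc_def)
lemma K_0: "0 \<in> K" by (rule sf_0[OF K_sf])
lemma K_1: "1 \<in> K" by (rule sf_1[OF K_sf])
lemma card_K: "card K \<ge> 2"
proof -
  have "{0, 1} \<subseteq> K" using K_0 K_1 by auto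
  then have "card {0::'f, 1} \<le> card K" using K_fin by (rule card_mono[rotated])
  then show ?thesis by simp
qed

lemma x0_ex: "\<exists>x0 B. \<not> algebraic_over K x0 \<and> finite B \<and> (\<forall>z. z \<in> spn (field_adj K x0) B)"
proof -
  obtain x0 where x0: "\<not> algebraic_over K x0" "finite_dim_over (field_adj K x0)"
    using ff by (auto simp: function_field_def)
  then obtain B where B: "finite B" "\<forall>z. \<exists>c. (\<forall>b\<in>B. c b \<in> field_adj K x0) \<and> z = (\<Sum>b\<in>B. c b * b)"
    by (auto simp: finite_dim_over_def)
  have "z \<in> spn (field_adj K x0) B" for z
  proof -
    obtain c where "\<forall>b\<in>B. c b \<in> field_adj K x0" "z = (\<Sum>b\<in>B. c b * b)" using B by blast
    then show ?thesis unfolding spn_def mem_Collect_eq by (intro exI[of _ c]) simp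
  qed
  then show ?thesis using x0 B by blast
qed

end

locale vring = ffield +
  fixes R :: "'f::field set"
  assumes vr: "valuation_ring K R"
begin

abbreviation "P \<equiv> place_ideal R"

lemma K_R: "K \<subseteq> R" using vr by (simp add: valuation_ring_def)
lemma R_ne: "R \<noteq> UNIV" using vr by (simp add: valuation_ring_def)
lemma R_add: "a \<in> R \<Longrightarrow> b \<in> R \<Longrightarrow> a + b \<in> R" using vr by (simp add: valuation_ring_def)
lemma R_mult: "a \<in> R \<Longrightarrow> b \<in> R \<Longrightarrow> a * b \<in> R" using vr by (simp add: valuation_ring_def)
lemma R_uminus: "a \<in> R \<Longrightarrow> - a \<in> R" using vr by (simp add: valuation_ring_def)
lemma R_inv: "z \<noteq> 0 \<Longrightarrow> z \<in> R \<or> inverse z \<in> R" using vr by (simp add: valuation_ring_def)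
lemma R_0: "0 \<in> R" using K_R K_0 by auto
lemma R_1: "1 \<in> R" using K_R K_1 by auto
lemma R_diff: "a \<in> R \<Longrightarrow> b \<in> R \<Longrightarrow> a - b \<in> R" using R_add[of a "-b"] R_uminus[of b] by simp
lemma R_sum: "(\<And>i. i \<in> I \<Longrightarrow> f i \<in> R) \<Longrightarrow> sum f I \<in> R"
  by (rule sum_closed) (auto intro: R_0 R_add)
lemma R_power: "a \<in> R \<Longrightarrow> a ^ n \<in> R" by (induction n) (auto intro: R_1 R_mult)
lemma R_poly: "pc K p \<Longrightarrow> x \<in> R \<Longrightarrow> poly p x \<in> R"
  by (rule poly_closed[of R]) (auto intro: R_0 R_add R_mult pc_mono[OF K_R])

lemma mem_P: "z \<in> P \<longleftrightarrow> z \<in> R \<and> (z = 0 \<or> inverse z \<notin> R)"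
  by (simp add: place_ideal_def)

lemma P_R: "z \<in> P \<Longrightarrow> z \<in> R" by (simp add: mem_P)
lemma P_0: "0 \<in> P" by (simp add: mem_P R_0)
lemma one_notin_P: "1 \<notin> P" by (simp add: mem_P R_1)

lemma isunit_notP: "isunit R z \<Longrightarrow> z \<notin> P" by (simp add: isunit_def mem_P)
lemma isunit_R: "isunit R z \<Longrightarrow> z \<in> R" by (simp add: isunit_def)
lemma isunit_nz: "isunit R z \<Longrightarrow> z \<noteq> 0" by (simp add: isunit_def)
lemma R_notP_unit: "z \<in> R \<Longrightarrow> z \<notin> P \<Longrightarrow> isunit R z" by (auto simp add: isunit_def mem_P)
lemma isunit_mult: "isunit R a \<Longrightarrow> isunit R b \<Longrightarrow> isunit R (a * b)"
  by (auto simp: isunit_def R_mult inverse_mult_distrib)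
lemma isunit_inverse: "isunit R a \<Longrightarrow> isunit R (inverse a)"
  by (auto simp: isunit_def)
lemma isunit_uminus: "isunit R a \<Longrightarrow> isunit R (- a)"
  by (auto simp: isunit_def R_uminus)
lemma isunit_1: "isunit R 1" by (simp add: isunit_def R_1)
lemma isunit_power: "isunit R a \<Longrightarrow> isunit R (a ^ n)"
  by (induction n) (auto intro: isunit_1 isunit_mult)
lemma K_unit: "a \<in> K \<Longrightarrow> a \<noteq> 0 \<Longrightarrow> isunit R a"
  using K_R sf_inverse[OF K_sf] by (auto simp: isunit_def)

lemma PR_mult: "p \<in> P \<Longrightarrow> r \<in> R \<Longrightarrow> p * r \<in> P"
proof -
  assume p: "p \<in> P" and r: "r \<in> R"
  have pr: "p * r \<in> R" using p r P_R R_mult by blast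
  show ?thesis
  proof (cases "p * r = 0")
    case True then show ?thesis using P_0 by auto
  next
    case False
    then have nz: "p \<noteq> 0" "r \<noteq> 0" by auto
    show ?thesis
    proof (rule ccontr)
      assume "p * r \<notin> P"
      then have "inverse (p * r) \<in> R" using pr by (simp add: mem_P)
      then have "r * inverse (p * r) \<in> R" using r R_mult by blast
      moreover have "r * inverse (p * r) = inverse p" using nz by (simp add: field_simps)
      ultimately have "inverse p \<in> R" by (simp only:)
      with p nz show False by (simp add: mem_P)
    qed
  qed
qed

lemma RP_mult: "r \<in> R \<Longrightarrow> p \<in> P \<Longrightarrow> r * p \<in> P"
  using PR_mult[of p r] by (simp add: mult.commute)

lemma P_uminus: "p \<in> P \<Longrightarrow> - p \<in> P"
  using PR_mult[of p "-1"] R_uminus[OF R_1] by simp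

lemma ratio_total: "a \<noteq> 0 \<Longrightarrow> b \<noteq> 0 \<Longrightarrow> a / b \<in> R \<or> b / a \<in> R"
  using R_inv[of "a / b"] by auto

lemma P_add: "a \<in> P \<Longrightarrow> b \<in> P \<Longrightarrow> a + b \<in> P"
proof -
  assume a: "a \<in> P" and b: "b \<in> P"
  show ?thesis
  proof (cases "a = 0 \<or> b = 0")
    case True then show ?thesis using a b by auto
  next
    case False
    then have nz: "a \<noteq> 0" "b \<noteq> 0" by auto
    from ratio_total[OF nz] show ?thesis
    proof
      assume "a / b \<in> R"
      then have "b * (a / b + 1) \<in> P" using b R_add R_1 RP_mult PR_mult by blast
      moreover have "b * (a / b + 1) = a + b" using nz by (simp add: distrib_left)
      ultimately show ?thesis by simp
    next
      assume "b / a \<in> R"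
      then have "a * (b / a + 1) \<in> P" using a R_add R_1 PR_mult by blast
      moreover have "a * (b / a + 1) = a + b" using nz by (simp add: distrib_left)
      ultimately show ?thesis by simp
    qed
  qed
qed

lemma P_diff: "a \<in> P \<Longrightarrow> b \<in> P \<Longrightarrow> a - b \<in> P"
  using P_add[of a "-b"] P_uminus[of b] by simp

lemma P_sum: "(\<And>i. i \<in> I \<Longrightarrow> f i \<in> P) \<Longrightarrow> sum f I \<in> P"
  by (rule sum_closed) (auto intro: P_0 P_add)

lemma unit_add_P: "isunit R u \<Longrightarrow> p \<in> P \<Longrightarrow> isunit R (u + p)"
proof -
  assume u: "isunit R u" and p: "p \<in> P"
  have "u + p \<in> R" using u p isunit_R P_R R_add by blast
  moreover have "u + p \<notin> P"
  proof
    assume "u + p \<in> P"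
    then have "(u + p) - p \<in> P" using p P_diff by blast
    then show False using u isunit_notP by simp
  qed
  ultimately show ?thesis by (rule R_notP_unit)
qed

lemma notR_inv_P: "z \<notin> R \<Longrightarrow> inverse z \<in> P"
proof -
  assume z: "z \<notin> R"
  then have "z \<noteq> 0" using R_0 by auto
  then have "inverse z \<in> R" using R_inv z by auto
  then show ?thesis using z by (simp add: mem_P)
qed

lemma P_nz: "\<exists>y. y \<in> P \<and> y \<noteq> 0"
proof -
  obtain z where "z \<notin> R" using R_ne by auto
  then show ?thesis using notR_inv_P[of z] R_0 by (intro exI[of _ "inverse z"]) auto
qed

lemma Kpoly_split: "pc K p \<Longrightarrow> \<exists>a q. a \<in> K \<and> pc K q \<and> p = pCons a q"
  by (cases p) (auto simp: pc_pCons)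

lemma Kpoly_unit: "pc K p \<Longrightarrow> y \<in> P \<Longrightarrow> coeff p 0 \<noteq> 0 \<Longrightarrow> isunit R (poly p y)"
proof -
  assume p: "pc K p" and y: "y \<in> P" and c: "coeff p 0 \<noteq> 0"
  obtain a q where aq: "a \<in> K" "pc K q" "p = pCons a q" using Kpoly_split[OF p] by blast
  have "poly p y = a + y * poly q y" using aq by simp
  moreover have "isunit R a" using aq c K_unit by simp
  moreover have "y * poly q y \<in> P" using PR_mult y R_poly aq P_R by blast
  ultimately show ?thesis using unit_add_P by simp
qed

lemma Kpoly_P: "pc K p \<Longrightarrow> coeff p 0 = 0 \<Longrightarrow> y \<in> R \<Longrightarrow> \<exists>w\<in>R. poly p y = y * w"
proof -
  assume p: "pc K p" and c: "coeff p 0 = 0" and y: "y \<in> R"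
  obtain a q where aq: "a \<in> K" "pc K q" "p = pCons a q" using Kpoly_split[OF p] by blast
  then have "poly p y = y * poly q y" using c by simp
  then show ?thesis using R_poly aq y by blast
qed

lemma Kpoly_0: "pc K p \<Longrightarrow> coeff p 0 = 0 \<Longrightarrow> y \<in> P \<Longrightarrow> poly p y \<in> P"
  using Kpoly_P[of p y] P_R[of y] PR_mult[of y] by auto

end

locale good = vring +
  fixes y and C
  assumes y_P: "y \<in> place_ideal R" and y_nz: "y \<noteq> 0" and C_fin: "finite C"
    and C_span: "\<forall>z. z \<in> spn (field_adj K y) C"
begin

lemma polyrel:
  assumes I: "finite I" "card I > card C"
  shows "\<exists>r. (\<forall>i\<in>I. pc K (r i)) \<and> (\<exists>i\<in>I. poly (r i) y \<noteq> 0) \<and> (\<Sum>i\<in>I. poly (r i) y * ws i) = 0"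
proof -
  obtain c where c: "\<forall>i\<in>I. c i \<in> field_adj K y" "\<exists>i\<in>I. c i \<noteq> 0" "(\<Sum>i\<in>I. c i * ws i) = 0"
    using steinitz[OF field_adj_subfield C_fin I, of ws] C_span by blast
  have "\<forall>i\<in>I. \<exists>p q. c i = poly p y / poly q y \<and> pc K p \<and> pc K q \<and> poly q y \<noteq> 0"
    using c(1) field_adj_Quot[OF K_sf] unfolding Quot_def by blast
  then obtain p q where pq: "\<And>i. i\<in>I \<Longrightarrow> c i = poly (p i) y / poly (q i) y \<and> pc K (p i) \<and> pc K (q i) \<and> poly (q i) y \<noteq> 0"
    by metis
  define r where "r i = p i * (\<Prod>j\<in>I-{i}. q j)" for i
  define D where "D = (\<Prod>j\<in>I. poly (q j) y)"
  have D: "D \<noteq> 0" using pq I by (simp add: D_def)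
  have rc: "poly (r i) y = c i * D" if "i \<in> I" for i
  proof -
    have "D = poly (q i) y * (\<Prod>j\<in>I-{i}. poly (q j) y)" unfolding D_def using that I by (simp add: prod.remove)
    then show ?thesis using pq[OF that] by (simp add: r_def poly_prod)
  qed
  have "\<forall>i\<in>I. pc K (r i)" unfolding r_def using pq by (auto intro!: sf_pc_mult[OF K_sf] sf_pc_prod[OF K_sf])
  moreover have "\<exists>i\<in>I. poly (r i) y \<noteq> 0" using c(2) rc D by auto
  moreover have "(\<Sum>i\<in>I. poly (r i) y * ws i) = D * (\<Sum>i\<in>I. c i * ws i)"
    by (simp add: rc sum_distrib_left mult_ac)
  ultimately show ?thesis using c(3) by auto
qed

lemma normrel:
  assumes I: "finite I" "card I > card C"
  shows "\<exists>r. (\<forall>i\<in>I. pc K (r i)) \<and> (\<exists>i\<in>I. coeff (r i) 0 \<noteq> 0) \<and> (\<Sum>i\<in>I. poly (r i) y * ws i) = 0"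
proof -
  define Q where "Q r \<longleftrightarrow> (\<forall>i\<in>I. pc K (r i)) \<and> (\<exists>i\<in>I. poly (r i) y \<noteq> 0) \<and> (\<Sum>i\<in>I. poly (r i) y * ws i) = 0" for r
  obtain r0 where "Q r0" using polyrel[OF I, of ws] Q_def by blast
  then obtain r where r: "Q r" and rmin: "\<And>r'. Q r' \<Longrightarrow> (\<Sum>i\<in>I. degree (r i)) \<le> (\<Sum>i\<in>I. degree (r' i))"
    using ex_has_least_nat[of Q r0 "\<lambda>r. \<Sum>i\<in>I. degree (r i)"] by blast
  show ?thesis
  proof (cases "\<exists>i\<in>I. coeff (r i) 0 \<noteq> 0")
    case True then show ?thesis using r Q_def by blast
  next
    case False
    have "\<forall>i\<in>I. \<exists>s. r i = pCons 0 s \<and> pc K s"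
    proof
      fix i assume i: "i \<in> I"
      obtain a s where "a \<in> K" "pc K s" "r i = pCons a s" using Kpoly_split r i Q_def by blast
      then show "\<exists>s. r i = pCons 0 s \<and> pc K s" using False i by auto
    qed
    then obtain s where s: "\<And>i. i \<in> I \<Longrightarrow> r i = pCons 0 (s i) \<and> pc K (s i)" by metis
    have ps: "poly (r i) y = y * poly (s i) y" if "i \<in> I" for i using s[OF that] by simp
    obtain i0 where i0: "i0 \<in> I" "poly (r i0) y \<noteq> 0" using r Q_def by blast
    have "Q s"
    proof -
      have "y * (\<Sum>i\<in>I. poly (s i) y * ws i) = (\<Sum>i\<in>I. poly (r i) y * ws i)"
        by (simp add: sum_distrib_left ps mult_ac)
      then have "(\<Sum>i\<in>I. poly (s i) y * ws i) = 0" using r y_nz Q_def by simp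
      moreover have "poly (s i0) y \<noteq> 0" using ps i0 by auto
      ultimately show ?thesis using s i0 Q_def by blast
    qed
    moreover have "(\<Sum>i\<in>I. degree (s i)) < (\<Sum>i\<in>I. degree (r i))"
    proof (rule sum_strict_mono_ex1[OF I(1)])
      show "\<forall>i\<in>I. degree (s i) \<le> degree (r i)" using s by auto
      have "s i0 \<noteq> 0" using ps i0 by auto
      then show "\<exists>i\<in>I. degree (s i) < degree (r i)" using s i0 by (intro bexI[OF _ i0(1)]) auto
    qed
    ultimately show ?thesis using rmin by fastforce
  qed
qed

lemma chain_bound:
  assumes n: "n > card C" and x0: "x 0 = y" and xP: "\<forall>i<n. x i \<in> P"
    and ch: "\<forall>i. Suc i < n \<longrightarrow> (\<exists>p\<in>P. x i = x (Suc i) * p)"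
  shows False
proof -
  have xnz: "x i \<noteq> 0" if "i < n" for i using that
  proof (induction i)
    case 0 thus ?case using x0 y_nz by simp
  next
    case (Suc i) then obtain p where "x i = x (Suc i) * p" using ch by auto
    with Suc show ?case by auto
  qed
  have quot: "x i / x j \<in> P" if "i < j" "j < n" for i j
    using that
  proof (induction j)
    case 0 then show ?case by simp
  next
    case (Suc j)
    obtain p where p: "p \<in> P" "x j = x (Suc j) * p" using ch Suc by auto
    have xs: "x (Suc j) \<noteq> 0" using xnz Suc by auto
    have pj: "x j / x (Suc j) = p" using p xs by auto
    show ?case
    proof (cases "i = j")
      case True then show ?thesis using pj p by simp
    next
      case False then have "x i / x j \<in> P" using Suc by auto
      then have "(x i / x j) * p \<in> P" using PR_mult p P_R by blast
      moreover have "x i / x (Suc j) = (x i / x j) * p" using xnz[of j] Suc pj by (auto simp: field_simps)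
      ultimately show ?thesis by simp
    qed
  qed
  have yx: "y / x j \<in> R" if "j < n" for j
  proof (cases "j = 0")
    case True then show ?thesis using x0 y_nz R_1 by simp
  next
    case False then show ?thesis using quot[of 0 j] that x0 P_R by auto
  qed
  obtain r where r: "\<forall>i\<in>{..<n}. pc K (r i)" "\<exists>i\<in>{..<n}. coeff (r i) 0 \<noteq> 0"
      "(\<Sum>i\<in>{..<n}. poly (r i) y * x i) = 0"
    using normrel[of "{..<n}" x] n by auto
  define S where "S = {i. i < n \<and> coeff (r i) 0 \<noteq> 0}"
  have Sfin: "finite S" "S \<noteq> {}" using r(2) by (auto simp: S_def)
  define M where "M = Max S"
  have M: "M < n" "coeff (r M) 0 \<noteq> 0" using Max_in[OF Sfin] by (auto simp: M_def S_def)
  have Mmax: "i \<le> M" if "i < n" "coeff (r i) 0 \<noteq> 0" for i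
    using Max_ge[OF Sfin(1)] that by (auto simp: M_def S_def)
  define c where "c i = poly (r i) y" for i
  have cu: "isunit R (c M)" unfolding c_def using Kpoly_unit r M y_P by auto
  have cR: "c i \<in> R" if "i < n" for i unfolding c_def using R_poly r that y_P P_R by auto
  have xM: "x M \<noteq> 0" using xnz M by auto
  have "c M * x M + (\<Sum>i\<in>{..<n}-{M}. c i * x i) = 0"
    using r(3) M by (simp add: c_def sum.remove)
  then have "c M * x M = - (\<Sum>i\<in>{..<n}-{M}. c i * x i)" by (simp add: eq_neg_iff_add_eq_0)
  then have "c M = - (\<Sum>i\<in>{..<n}-{M}. c i * x i) / x M" using xM by (metis nonzero_mult_div_cancel_right minus_divide_left)
  also have "\<dots> = - (\<Sum>i\<in>{..<n}-{M}. c i * (x i / x M))"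
    by (simp add: sum_divide_distrib)
  finally have cM: "c M = - (\<Sum>i\<in>{..<n}-{M}. c i * (x i / x M))" .
  have "(\<Sum>i\<in>{..<n}-{M}. c i * (x i / x M)) \<in> P"
  proof (rule P_sum)
    fix i assume i: "i \<in> {..<n}-{M}"
    show "c i * (x i / x M) \<in> P"
    proof (cases "i < M")
      case True
      then have "x i / x M \<in> P" "c i \<in> R" using quot M i cR by auto
      then show ?thesis using RP_mult by blast
    next
      case False
      then have "coeff (r i) 0 = 0" using Mmax i by force
      then obtain w where w: "w \<in> R" "c i = y * w" using Kpoly_P r i y_P P_R unfolding c_def by blast
      have "c i * (x i / x M) = (w * (y / x M)) * x i" using w xM by (simp add: field_simps)
      moreover have "w * (y / x M) \<in> R" using w yx M R_mult by blast
      moreover have "x i \<in> P" using xP i by auto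
      ultimately show ?thesis using RP_mult by metis
    qed
  qed
  then have "c M \<in> P" using cM P_uminus by simp
  then show False using cu isunit_notP by blast
qed

lemma P_principal: "\<exists>t\<in>P. P = {t * u | u. u \<in> R}"
proof (rule ccontr)
  assume np: "\<not> ?thesis"
  have step: "\<exists>z. z \<in> P \<and> z \<noteq> 0 \<and> (\<exists>p\<in>P. a = z * p)" if a: "a \<in> P" "a \<noteq> 0" for a
  proof -
    have "P \<noteq> {a * u | u. u \<in> R}" using np a by blast
    moreover have "{a * u | u. u \<in> R} \<subseteq> P" using PR_mult a by auto
    ultimately obtain z where z: "z \<in> P" "z \<notin> {a * u | u. u \<in> R}" by blast
    have znz: "z \<noteq> 0" using z R_0 by (metis (mono_tags, lifting) mem_Collect_eq mult_zero_right)
    have "z / a \<notin> R"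
    proof
      assume "z / a \<in> R"
      moreover have "z = a * (z / a)" using a by simp
      ultimately show False using z by blast
    qed
    then have aR: "a / z \<in> R" using ratio_total[OF a(2) znz] by blast
    have "a / z \<in> P"
    proof (rule ccontr)
      assume "a / z \<notin> P"
      then have "inverse (a / z) \<in> R" using aR by (simp add: mem_P)
      then show False using \<open>z / a \<notin> R\<close> by simp
    qed
    moreover have "a = z * (a / z)" using znz by simp
    ultimately show ?thesis using z znz by blast
  qed
  then obtain nx where nx: "\<And>a. a \<in> P \<Longrightarrow> a \<noteq> 0 \<Longrightarrow> nx a \<in> P \<and> nx a \<noteq> 0 \<and> (\<exists>p\<in>P. a = nx a * p)"
    by metis
  define x where "x i = (nx ^^ i) y" for i
  have xi: "x i \<in> P \<and> x i \<noteq> 0" for i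
    by (induction i) (auto simp: x_def y_P y_nz nx)
  show False
  proof (rule chain_bound[of "Suc (card C)" x])
    show "x 0 = y" by (simp add: x_def)
    show "\<forall>i<Suc (card C). x i \<in> P" using xi by auto
    show "\<forall>i. Suc i < Suc (card C) \<longrightarrow> (\<exists>p\<in>P. x i = x (Suc i) * p)"
      using nx xi by (auto simp: x_def)
  qed simp
qed

end



context vring begin

lemma isunit_powi: "isunit R a \<Longrightarrow> isunit R (a powi k)"
  by (auto simp: power_int_def intro: isunit_power isunit_inverse)

end

context good begin

definition unif where "unif = (SOME t. t \<in> P \<and> P = {t * u | u. u \<in> R})"

lemma unif: "unif \<in> P" "P = {unif * u | u. u \<in> R}"
  using someI_ex[OF P_principal[unfolded Bex_def]] unfolding unif_def by blast+

lemma unif_R: "unif \<in> R" using unif P_R by blast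

lemma unif_nz: "unif \<noteq> 0"
proof
  assume "unif = 0"
  then have "P \<subseteq> {0}" using unif by auto
  then show False using y_P y_nz by auto
qed

definition tR :: "nat \<Rightarrow> 'a set" where "tR k = {unif ^ k * w | w. w \<in> R}"

lemma tR_I: "w \<in> R \<Longrightarrow> unif ^ k * w \<in> tR k" unfolding tR_def by blast
lemma tR_E: "z \<in> tR k \<Longrightarrow> \<exists>w\<in>R. z = unif ^ k * w" unfolding tR_def by blast
lemma tR_0: "0 \<in> tR k" using tR_I[OF R_0] by simp
lemma tR_R: "z \<in> tR k \<Longrightarrow> z \<in> R" using R_mult R_power unif_R by (auto simp: tR_def)
lemma tR_mult: "z \<in> tR k \<Longrightarrow> r \<in> R \<Longrightarrow> z * r \<in> tR k"
proof -
  assume "z \<in> tR k" "r \<in> R"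
  then obtain w where "w \<in> R" "z = unif ^ k * w" using tR_E by blast
  then show ?thesis using tR_I[of "w * r" k] R_mult \<open>r \<in> R\<close> by (simp add: mult.assoc)
qed
lemma tR_add: "a \<in> tR k \<Longrightarrow> b \<in> tR k \<Longrightarrow> a + b \<in> tR k"
proof -
  assume "a \<in> tR k" "b \<in> tR k"
  then obtain v w where "v \<in> R" "w \<in> R" "a = unif ^ k * v" "b = unif ^ k * w" by (auto simp: tR_def)
  then show ?thesis using tR_I[of "v + w" k] R_add by (simp add: distrib_left)
qed
lemma tR_sum: "(\<And>i. i \<in> I \<Longrightarrow> f i \<in> tR k) \<Longrightarrow> sum f I \<in> tR k"
  by (rule sum_closed) (auto intro: tR_0 tR_add)
lemma tR_uminus: "a \<in> tR k \<Longrightarrow> - a \<in> tR k"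
  using tR_mult[of a k "-1"] R_uminus[OF R_1] by simp

lemma tpow_P: "k \<ge> 1 \<Longrightarrow> unif ^ k \<in> P"
proof -
  assume "k \<ge> 1"
  then obtain m where "k = Suc m" by (cases k) auto
  then show ?thesis using PR_mult[OF unif(1) R_power[OF unif_R, of m]] by simp
qed

lemma P_tR1: "z \<in> P \<Longrightarrow> z \<in> tR 1"
  using unif(2) by (auto simp: tR_def)

lemma y_order: "y \<in> tR k \<Longrightarrow> k \<le> card C"
proof (rule ccontr)
  assume yk: "y \<in> tR k" and "\<not> k \<le> card C"
  then have k: "k > card C" by simp
  obtain u where u: "u \<in> R" "y = unif ^ k * u" using tR_E[OF yk] by blast
  define x where "x j = (if j = 0 then y else unif ^ (k - j))" for j
  show False
  proof (rule chain_bound[of k x])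
    show "card C < k" by (rule k)
    show "x 0 = y" by (simp add: x_def)
    show "\<forall>i<k. x i \<in> P" using y_P tpow_P by (auto simp: x_def)
    show "\<forall>i. Suc i < k \<longrightarrow> (\<exists>p\<in>P. x i = x (Suc i) * p)"
    proof (intro allI impI)
      fix i assume i: "Suc i < k"
      show "\<exists>p\<in>P. x i = x (Suc i) * p"
      proof (cases "i = 0")
        case True
        obtain k' where k': "k = Suc k'" using i by (cases k) auto
        have "y = unif ^ (k - 1) * (unif * u)" using u k' by (simp add: mult_ac)
        moreover have "unif * u \<in> P" using PR_mult unif u by blast
        ultimately show ?thesis using True by (auto simp: x_def)
      next
        case False
        have "k - i = Suc (k - Suc i)" using i by simp
        then have "unif ^ (k - i) = unif ^ (k - Suc i) * unif" by (simp add: mult_ac)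
        then show ?thesis using False unif by (auto simp: x_def)
      qed
    qed
  qed
qed

lemma unit_form_or_small:
  assumes z: "z \<in> R" "z \<noteq> 0" and nf: "\<not> (\<exists>k u. isunit R u \<and> z = unif ^ k * u)"
  shows "z \<in> tR k"
proof (induction k)
  case 0 then show ?case using tR_I[OF z(1), of 0] by simp
next
  case (Suc k)
  then obtain w where w: "w \<in> R" "z = unif ^ k * w" using tR_E by blast
  have "w \<in> P" using nf w R_notP_unit by blast
  then obtain v where v: "v \<in> R" "w = unif * v" using unif by auto
  have "z = unif ^ Suc k * v" using w v by (simp add: mult_ac)
  then show ?case using tR_I[OF v(1), of "Suc k"] by simp
qed

lemma y_form: "\<exists>e u. isunit R u \<and> y = unif ^ e * u"
  using unit_form_or_small[OF P_R[OF y_P] y_nz] y_order[of "Suc (card C)"] by force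

lemma poly_form: "pc K p \<Longrightarrow> poly p y \<noteq> 0 \<Longrightarrow> \<exists>k u. isunit R u \<and> poly p y = unif ^ k * u"
proof (induction p)
  case 0 then show ?case by simp
next
  case (pCons a p)
  show ?case
  proof (cases "a = 0")
    case False
    have "isunit R (poly (pCons a p) y)" by (rule Kpoly_unit[OF pCons.prems(1) y_P]) (simp add: False)
    moreover have "poly (pCons a p) y = unif ^ 0 * poly (pCons a p) y" by simp
    ultimately show ?thesis by blast
  next
    case True
    then have e: "poly (pCons a p) y = y * poly p y" by simp
    then have "poly p y \<noteq> 0" "pc K p" using pCons by (auto simp: pc_pCons)
    then obtain k u where ku: "isunit R u" "poly p y = unif ^ k * u" using pCons by blast
    obtain e v where ev: "isunit R v" "y = unif ^ e * v" using y_form by blast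
    have "poly (pCons a p) y = unif ^ (e + k) * (v * u)" using e ku ev by (simp add: power_add mult_ac)
    then show ?thesis using isunit_mult ku ev by blast
  qed
qed

lemma no_infsmall:
  assumes z: "z \<in> R" "z \<noteq> 0" and small: "\<forall>k. z \<in> tR k"
  shows False
proof -
  define N where "N = card C"
  obtain r where r: "\<forall>i\<in>{..N}. pc K (r i)" "\<exists>i\<in>{..N}. poly (r i) y \<noteq> 0"
      "(\<Sum>i\<in>{..N}. poly (r i) y * z ^ i) = 0"
    using polyrel[of "{..N}" "\<lambda>i. z ^ i"] N_def by auto
  define c where "c i = poly (r i) y" for i
  define S where "S = {i. i \<le> N \<and> c i \<noteq> 0}"
  have Sfin: "finite S" "S \<noteq> {}" using r(2) by (auto simp: S_def c_def)
  define k0 where "k0 = Min S"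
  have k0: "k0 \<le> N" "c k0 \<noteq> 0" using Min_in[OF Sfin] by (auto simp: k0_def S_def)
  have k0min: "c i = 0" if "i < k0" for i
  proof (rule ccontr)
    assume "c i \<noteq> 0"
    then have "i \<in> S" using that k0 by (simp add: S_def)
    then have "k0 \<le> i" using Min_le[OF Sfin(1)] k0_def by simp
    with that show False by simp
  qed
  obtain m u where mu: "isunit R u" "c k0 = unif ^ m * u"
    using poly_form[of "r k0"] r k0 by (auto simp: c_def)
  define tm where "tm i = (if i < k0 then 0 else c i * z ^ (i - k0))" for i
  have cR: "c i \<in> R" if "i \<le> N" for i using R_poly r that y_P P_R by (auto simp: c_def)
  have "(\<Sum>i\<in>{..N}. c i * z ^ i) / z ^ k0 = 0" using r(3) by (simp add: c_def)
  then have "(\<Sum>i\<in>{..N}. tm i) = 0"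
    unfolding sum_divide_distrib
    by (smt (verit) k0min mult_eq_0_iff power_diff sum.cong tm_def times_divide_eq_right z(2) not_less)
  then have "tm k0 + (\<Sum>i\<in>{..N}-{k0}. tm i) = 0" using k0 by (simp add: sum.remove)
  then have "c k0 = - (\<Sum>i\<in>{..N}-{k0}. tm i)" by (simp add: tm_def eq_neg_iff_add_eq_0)
  moreover have "(\<Sum>i\<in>{..N}-{k0}. tm i) \<in> tR (Suc m)"
  proof (rule tR_sum)
    fix i assume i: "i \<in> {..N}-{k0}"
    show "tm i \<in> tR (Suc m)"
    proof (cases "i < k0")
      case True then show ?thesis by (simp add: tm_def tR_0)
    next
      case False
      then have "i - k0 = Suc (i - k0 - 1)" using i by auto
      then have e: "c i * z ^ (i - k0) = z * (c i * z ^ (i - k0 - 1))" by (metis mult.left_commute power_Suc)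
      have "c i * z ^ (i - k0 - 1) \<in> R" using cR i R_power z R_mult by auto
      then have "z * (c i * z ^ (i - k0 - 1)) \<in> tR (Suc m)" using tR_mult small by blast
      then have "c i * z ^ (i - k0) \<in> tR (Suc m)" by (simp only: e)
      then show ?thesis using False by (simp add: tm_def)
    qed
  qed
  ultimately have "unif ^ m * u \<in> tR (Suc m)" using mu tR_uminus by fastforce
  then obtain w where w: "w \<in> R" "unif ^ m * u = unif ^ Suc m * w" using tR_E by blast
  then have "u = unif * w" using unif_nz by (simp add: mult.assoc)
  then have "u \<in> P" using PR_mult[OF unif(1) w(1)] by simp
  then show False using mu isunit_notP by blast
qed

lemma unit_form_R: "z \<in> R \<Longrightarrow> z \<noteq> 0 \<Longrightarrow> \<exists>k u. isunit R u \<and> z = unif ^ k * u"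
  using unit_form_or_small no_infsmall by blast

lemma unit_form: "z \<noteq> 0 \<Longrightarrow> \<exists>n u. isunit R u \<and> z = unif powi n * u"
proof (cases "z \<in> R")
  case True
  assume "z \<noteq> 0"
  then obtain k u where "isunit R u" "z = unif ^ k * u" using unit_form_R True by blast
  then show ?thesis by (intro exI[of _ "int k"] exI[of _ u]) auto
next
  case False
  then have iz: "inverse z \<in> R" "inverse z \<noteq> 0" using notR_inv_P P_R R_0 by auto
  then obtain k u where ku: "isunit R u" "inverse z = unif ^ k * u" using unit_form_R by blast
  then have "z = unif powi (- int k) * inverse u"
    by (metis inverse_inverse_eq inverse_mult_distrib mult.commute power_int_minus power_int_of_nat)
  then show ?thesis using isunit_inverse ku by blast
qed

lemma tpowi_unit: "isunit R (unif powi k) \<Longrightarrow> k = 0"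
proof (rule ccontr)
  assume u: "isunit R (unif powi k)" and k: "k \<noteq> 0"
  show False
  proof (cases "k > 0")
    case True
    then have "unif powi k = unif ^ nat k" by (simp add: power_int_def)
    then have "unif powi k \<in> P" using tpow_P True by simp
    then show False using u isunit_notP by blast
  next
    case False
    then have "unif powi k = inverse (unif ^ nat (- k))" by (simp add: power_int_def power_inverse)
    then have "isunit R (unif ^ nat (- k))" using isunit_inverse[OF u] by simp
    moreover have "unif ^ nat (- k) \<in> P" using tpow_P False k by simp
    ultimately show False using isunit_notP by blast
  qed
qed

lemma P_gen: "P = {t * v | v. v \<in> R} \<Longrightarrow> t \<in> R \<Longrightarrow> \<exists>a. isunit R a \<and> t = unif * a"
proof -
  assume Pt: "P = {t * v | v. v \<in> R}" and tR: "t \<in> R"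
  have "t \<in> P" using Pt R_1 by (auto intro!: exI[of _ 1])
  then obtain a where a: "a \<in> R" "t = unif * a" using unif by auto
  have "unif \<in> {t * v | v. v \<in> R}" using unif Pt by blast
  then obtain b where b: "b \<in> R" "unif = t * b" by blast
  then have "unif = unif * (a * b)" using a by (simp add: mult.assoc)
  then have "a * b = 1" using unif_nz by simp
  then have "inverse a = b" by (rule inverse_unique)
  then have "isunit R a" using a b \<open>a * b = 1\<close> by (auto simp: isunit_def)
  then show ?thesis using a by blast
qed

lemma val_char:
  assumes u: "isunit R u" and z: "z = unif powi n * u"
  shows "val R z = n"
proof -
  have znz: "z \<noteq> 0" using z u unif_nz by (auto simp: isunit_def)
  have pn: "z * unif powi (- n) = u" using z unif_nz by (simp add: power_int_minus)
  show ?thesis unfolding val_def if_not_P[OF znz]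
  proof (rule the_equality)
    show "\<exists>t\<in>R. P = {t * y |y. y \<in> R} \<and> z * t powi (- n) \<in> R \<and> inverse (z * t powi (- n)) \<in> R"
      using unif unif_R pn u by (intro bexI[of _ unif]) (auto simp: isunit_def)
  next
    fix m assume "\<exists>t\<in>R. P = {t * y |y. y \<in> R} \<and> z * t powi (- m) \<in> R \<and> inverse (z * t powi (- m)) \<in> R"
    then obtain t where t: "t \<in> R" "P = {t * y |y. y \<in> R}" "z * t powi (- m) \<in> R" "inverse (z * t powi (- m)) \<in> R"
      by blast
    obtain a where a: "isunit R a" "t = unif * a" using P_gen t by blast
    have anz: "a \<noteq> 0" using a by (simp add: isunit_def)
    have "z * t powi (- m) = unif powi (n - m) * (u * a powi (- m))"
      using z a unif_nz anz by (simp add: power_int_mult_distrib power_int_diff power_int_minus field_simps)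
    moreover have "isunit R (z * t powi (- m))" using t znz unif_nz a by (auto simp: isunit_def)
    moreover have "isunit R (u * a powi (- m))" using isunit_mult isunit_powi u a by blast
    ultimately have "isunit R (unif powi (n - m))"
      using isunit_mult[OF _ isunit_inverse] isunit_nz
      by (metis (no_types, lifting) mult.assoc mult.right_neutral right_inverse)
    then have "n - m = 0" by (rule tpowi_unit)
    then show "m = n" by simp
  qed
qed

lemma val_form: "z \<noteq> 0 \<Longrightarrow> \<exists>u. isunit R u \<and> z = unif powi (val R z) * u"
  using unit_form val_char by metis

lemma val_unit: "isunit R u \<Longrightarrow> val R u = 0"
  using val_char[of u u 0] by simp

lemma val_mult: "a \<noteq> 0 \<Longrightarrow> b \<noteq> 0 \<Longrightarrow> val R (a * b) = val R a + val R b"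
proof -
  assume "a \<noteq> 0" "b \<noteq> 0"
  then obtain m n u v where uv: "isunit R u" "a = unif powi m * u" "isunit R v" "b = unif powi n * v"
    using unit_form by metis
  then have "val R a = m" "val R b = n" using val_char by auto
  moreover have "a * b = unif powi (m + n) * (u * v)" "isunit R (u * v)"
    using uv unif_nz isunit_mult by (auto simp: power_int_add mult_ac)
  ultimately show ?thesis using val_char by metis
qed

lemma val_inverse: "a \<noteq> 0 \<Longrightarrow> val R (inverse a) = - val R a"
proof -
  assume "a \<noteq> 0"
  then obtain m u where u: "isunit R u" "a = unif powi m * u" using unit_form by metis
  then have "val R a = m" using val_char by auto
  moreover have "inverse a = unif powi (- m) * inverse u" "isunit R (inverse u)"
    using u isunit_inverse by (auto simp: power_int_minus mult.commute)
  ultimately show ?thesis using val_char by metis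
qed

lemma val_R: "z \<noteq> 0 \<Longrightarrow> z \<in> R \<longleftrightarrow> val R z \<ge> 0"
proof -
  assume z: "z \<noteq> 0"
  then obtain m u where u0: "isunit R u" "z = unif powi m * u" using unit_form by metis
  then have vm: "val R z = m" using val_char by auto
  then have u: "isunit R u" "z = unif powi (val R z) * u" using u0 by auto
  show ?thesis
  proof
    assume zR: "z \<in> R"
    show "val R z \<ge> 0"
    proof (rule ccontr)
      assume "\<not> val R z \<ge> 0"
      then have "inverse z = unif ^ nat (- m) * inverse u"
        using u0 vm by (simp add: power_int_def power_inverse mult.commute)
      moreover have "unif ^ nat (- m) \<in> P" using tpow_P \<open>\<not> val R z \<ge> 0\<close> vm by simp
      ultimately have "inverse z \<in> P" using PR_mult isunit_R isunit_inverse u by simp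
      then have "z * inverse z \<in> P" using RP_mult zR by blast
      then show False using z one_notin_P by simp
    qed
  next
    assume "val R z \<ge> 0"
    then have "z = unif ^ nat m * u" using u0 vm by (simp add: power_int_def)
    then show "z \<in> R" using R_mult R_power unif_R isunit_R u by simp
  qed
qed

lemma val_P: "z \<noteq> 0 \<Longrightarrow> z \<in> P \<longleftrightarrow> val R z \<ge> 1"
proof -
  assume z: "z \<noteq> 0"
  have "z \<in> P \<longleftrightarrow> z \<in> R \<and> inverse z \<notin> R" using z by (simp add: mem_P)
  also have "\<dots> \<longleftrightarrow> val R z \<ge> 0 \<and> \<not> (- val R z \<ge> 0)" using val_R[OF z] val_R[of "inverse z"] z val_inverse by simp
  finally show ?thesis by linarith
qed

lemma val_uminus: "val R (- a) = val R a"
proof (cases "a = 0")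
  case False
  have "isunit R (-1)" using isunit_uminus[OF isunit_1] .
  then have "val R (-1) = 0" by (rule val_unit)
  then show ?thesis using val_mult[OF False, of "-1"] by simp
qed simp

lemma val_add: "a \<noteq> 0 \<Longrightarrow> b \<noteq> 0 \<Longrightarrow> a + b \<noteq> 0 \<Longrightarrow> val R (a + b) \<ge> min (val R a) (val R b)"
proof -
  have main: "val R (a + b) \<ge> val R a" if "a \<noteq> 0" "b \<noteq> 0" "a + b \<noteq> 0" "val R a \<le> val R b" for a b
  proof -
    have "val R (b / a) = val R b - val R a" using that val_mult val_inverse by (simp add: divide_inverse)
    then have "b / a \<in> R" using that val_R[of "b / a"] by simp
    then have "1 + b / a \<in> R" using R_1 R_add by blast
    moreover have "1 + b / a \<noteq> 0" using that by (simp add: field_simps)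
    ultimately have "val R (1 + b / a) \<ge> 0" using val_R by blast
    moreover have "a + b = a * (1 + b / a)" using that by (simp add: field_simps)
    ultimately show ?thesis using val_mult that \<open>1 + b / a \<noteq> 0\<close> by simp
  qed
  assume "a \<noteq> 0" "b \<noteq> 0" "a + b \<noteq> 0"
  then show ?thesis using main[of a b] main[of b a] by (cases "val R a \<le> val R b") (auto simp: add.commute)
qed

lemma val_K: "a \<in> K \<Longrightarrow> a \<noteq> 0 \<Longrightarrow> val R a = 0"
  using val_unit K_unit by blast

lemma val_unif: "val R unif = 1"
  using val_char[of 1 unif 1] isunit_1 by simp

end



context vring begin

definition indepP :: "'f set \<Rightarrow> bool" where
  "indepP Z \<longleftrightarrow> (\<forall>a. (\<forall>b\<in>Z. a b \<in> K) \<longrightarrow> (\<Sum>b\<in>Z. a b * b) \<in> P \<longrightarrow> (\<forall>b\<in>Z. a b = 0))"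

definition cosP :: "'f \<Rightarrow> 'f set" where "cosP z = {z + p | p. p \<in> P}"

lemma cosP_eq: "z - w \<in> P \<Longrightarrow> cosP z = cosP w"
proof -
  assume zw: "z - w \<in> P"
  have "cosP z \<subseteq> cosP w" if "z - w \<in> P" for z w
  proof
    fix x assume "x \<in> cosP z"
    then obtain p where "p \<in> P" "x = z + p" by (auto simp: cosP_def)
    then have "x = w + ((z - w) + p)" "(z - w) + p \<in> P" using that P_add by auto
    then show "x \<in> cosP w" unfolding cosP_def by blast
  qed
  moreover have "w - z \<in> P" using P_uminus[OF zw] by simp
  ultimately show ?thesis using zw by blast
qed

lemma cosP_eqD: "cosP z = cosP w \<Longrightarrow> z - w \<in> P"
proof -
  assume "cosP z = cosP w"
  moreover have "z \<in> cosP z" using P_0 by (auto simp: cosP_def intro!: exI[of _ 0])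
  ultimately obtain p where "p \<in> P" "z = w + p" by (auto simp: cosP_def)
  then show ?thesis by simp
qed

lemma residue_field_cosP: "residue_field R = cosP ` R"
  by (simp add: residue_field_def cosP_def)

lemma eval_at_unique: "c \<in> K \<Longrightarrow> c' \<in> K \<Longrightarrow> z - c \<in> P \<Longrightarrow> z - c' \<in> P \<Longrightarrow> c = c'"
proof (rule ccontr)
  assume c: "c \<in> K" "c' \<in> K" "z - c \<in> P" "z - c' \<in> P" "c \<noteq> c'"
  then have "(z - c') - (z - c) \<in> P" using P_diff by blast
  then have "c - c' \<in> P" by simp
  moreover have "isunit R (c - c')" using c K_unit sf_diff[OF K_sf] by simp
  ultimately show False using isunit_notP by blast
qed

lemma eval_at_char: "c \<in> K \<Longrightarrow> z - c \<in> P \<Longrightarrow> eval_at K R z = c"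
  unfolding eval_at_def using eval_at_unique by blast

end

context good begin

lemma resrel:
  assumes I: "finite I" "card I > card C" and ws: "\<forall>i\<in>I. ws i \<in> R"
  shows "\<exists>a. (\<forall>i\<in>I. a i \<in> K) \<and> (\<exists>i\<in>I. a i \<noteq> 0) \<and> (\<Sum>i\<in>I. a i * ws i) \<in> P"
proof -
  obtain r where r: "\<forall>i\<in>I. pc K (r i)" "\<exists>i\<in>I. coeff (r i) 0 \<noteq> 0" "(\<Sum>i\<in>I. poly (r i) y * ws i) = 0"
    using normrel[OF I] by blast
  have "\<forall>i\<in>I. \<exists>w\<in>R. poly (r i) y = coeff (r i) 0 + y * w"
  proof
    fix i assume i: "i \<in> I"
    obtain a q where "a \<in> K" "pc K q" "r i = pCons a q" using Kpoly_split r i by blast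
    then show "\<exists>w\<in>R. poly (r i) y = coeff (r i) 0 + y * w" using R_poly y_P P_R by auto
  qed
  then obtain w where w: "\<And>i. i \<in> I \<Longrightarrow> w i \<in> R \<and> poly (r i) y = coeff (r i) 0 + y * w i" by metis
  have "(\<Sum>i\<in>I. poly (r i) y * ws i) = (\<Sum>i\<in>I. (coeff (r i) 0 + y * w i) * ws i)"
    by (rule sum.cong) (auto simp: w)
  also have "\<dots> = (\<Sum>i\<in>I. coeff (r i) 0 * ws i) + y * (\<Sum>i\<in>I. w i * ws i)"
    by (simp add: distrib_right sum.distrib sum_distrib_left mult.assoc)
  finally have "(\<Sum>i\<in>I. coeff (r i) 0 * ws i) = - (y * (\<Sum>i\<in>I. w i * ws i))"
    using r(3) by (simp add: eq_neg_iff_add_eq_0)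
  moreover have "(\<Sum>i\<in>I. w i * ws i) \<in> R" by (rule R_sum) (use w ws in \<open>auto intro: R_mult\<close>)
  then have "y * (\<Sum>i\<in>I. w i * ws i) \<in> P" using PR_mult y_P by blast
  ultimately have "(\<Sum>i\<in>I. coeff (r i) 0 * ws i) \<in> P" using P_uminus by simp
  then show ?thesis using r pc_coeff by (intro exI[of _ "\<lambda>i. coeff (r i) 0"]) auto
qed

lemma indep_card: "finite Z \<Longrightarrow> Z \<subseteq> R \<Longrightarrow> indepP Z \<Longrightarrow> card Z \<le> card C"
proof (rule ccontr)
  assume Z: "finite Z" "Z \<subseteq> R" "indepP Z" "\<not> card Z \<le> card C"
  then obtain a where "\<forall>i\<in>Z. a i \<in> K" "\<exists>i\<in>Z. a i \<noteq> 0" "(\<Sum>i\<in>Z. a i * id i) \<in> P"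
    using resrel[of Z id] by auto
  then show False using Z(3) unfolding indepP_def by auto
qed

lemma basis: "\<exists>Z. finite Z \<and> Z \<subseteq> R \<and> indepP Z \<and> (\<forall>z\<in>R. \<exists>a. (\<forall>b\<in>Z. a b \<in> K) \<and> z - (\<Sum>b\<in>Z. a b * b) \<in> P)"
proof -
  define Q where "Q Z \<longleftrightarrow> finite Z \<and> Z \<subseteq> R \<and> indepP Z" for Z
  have Q0: "Q {}" by (simp add: Q_def indepP_def)
  have bnd: "\<forall>Z. Q Z \<longrightarrow> card Z < Suc (card C)" using indep_card Q_def by (simp add: less_Suc_eq_le)
  obtain Z where Z: "Q Z" and Zmax: "\<And>Z'. Q Z' \<Longrightarrow> card Z' \<le> card Z"
    using ex_has_greatest_nat[of Q "{}" card "Suc (card C)", OF Q0 bnd] by blast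
  have span: "\<exists>a. (\<forall>b\<in>Z. a b \<in> K) \<and> z - (\<Sum>b\<in>Z. a b * b) \<in> P" if z: "z \<in> R" for z
  proof (cases "z \<in> Z")
    case True
    have "(\<Sum>b\<in>Z. (if b = z then 1 else 0) * b) = (\<Sum>b\<in>Z. if b = z then b else 0)"
      by (rule sum.cong) auto
    also have "\<dots> = z" using True Z by (simp add: Q_def sum.delta')
    finally have f1: "z - (\<Sum>b\<in>Z. (if b = z then 1 else 0) * b) \<in> P" using P_0 by simp
    have f2: "\<forall>b\<in>Z. (if b = z then 1 else 0) \<in> K" using K_0 K_1 by auto
    show ?thesis by (rule exI[of _ "\<lambda>b. if b = z then 1 else 0"]) (use f1 f2 in simp)
  next
    case False
    have "\<not> indepP (insert z Z)"
    proof
      assume "indepP (insert z Z)"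
      then have "Q (insert z Z)" using Z z Q_def by auto
      then have "card (insert z Z) \<le> card Z" by (rule Zmax)
      then show False using False Z Q_def by simp
    qed
    then obtain a where a: "\<forall>b\<in>insert z Z. a b \<in> K" "(\<Sum>b\<in>insert z Z. a b * b) \<in> P" "\<exists>b\<in>insert z Z. a b \<noteq> 0"
      unfolding indepP_def by blast
    have sum: "(\<Sum>b\<in>insert z Z. a b * b) = a z * z + (\<Sum>b\<in>Z. a b * b)" using False Z Q_def by simp
    have az: "a z \<noteq> 0"
    proof
      assume az: "a z = 0"
      then have "(\<Sum>b\<in>Z. a b * b) \<in> P" using a(2) sum by simp
      then have "\<forall>b\<in>Z. a b = 0" using Z a(1) unfolding Q_def indepP_def by blast
      then show False using a(3) az by auto
    qed
    define a' where "a' b = - a b / a z" for b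
    have s1: "(\<Sum>b\<in>Z. a' b * b) = - (inverse (a z) * (\<Sum>b\<in>Z. a b * b))"
      unfolding a'_def by (simp add: sum_distrib_left sum_negf divide_inverse mult_ac)
    have "z - (\<Sum>b\<in>Z. a' b * b) = inverse (a z) * (\<Sum>b\<in>insert z Z. a b * b)"
      using az by (simp add: s1 sum distrib_left)
    moreover have "inverse (a z) \<in> R" using az a(1) K_R sf_inverse[OF K_sf] by auto
    ultimately have "z - (\<Sum>b\<in>Z. a' b * b) \<in> P" using RP_mult a(2) by simp
    moreover have "\<forall>b\<in>Z. a' b \<in> K" using a(1) unfolding a'_def by (auto intro: sf_divide[OF K_sf] sf_uminus[OF K_sf])
    ultimately show ?thesis by blast
  qed
  then have "\<forall>z\<in>R. \<exists>a. (\<forall>b\<in>Z. a b \<in> K) \<and> z - (\<Sum>b\<in>Z. a b * b) \<in> P" by blast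
  then have "finite Z \<and> Z \<subseteq> R \<and> indepP Z \<and> (\<forall>z\<in>R. \<exists>a. (\<forall>b\<in>Z. a b \<in> K) \<and> z - (\<Sum>b\<in>Z. a b * b) \<in> P)"
    using Z unfolding Q_def by simp
  then show ?thesis by (rule exI)
qed

lemma sumK_R: "(\<forall>b\<in>Z. a b \<in> K) \<Longrightarrow> Z \<subseteq> R \<Longrightarrow> (\<Sum>b\<in>Z. a b * b) \<in> R"
  using K_R by (auto intro!: R_sum R_mult)

lemma reps: "\<exists>Rep. finite Rep \<and> Rep \<subseteq> R \<and> (\<forall>z\<in>R. \<exists>s\<in>Rep. z - s \<in> P)"
proof -
  obtain Z where Z: "finite Z" "Z \<subseteq> R" "indepP Z" "\<forall>z\<in>R. \<exists>a. (\<forall>b\<in>Z. a b \<in> K) \<and> z - (\<Sum>b\<in>Z. a b * b) \<in> P"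
    using basis by blast
  define Rep where "Rep = (\<lambda>a. \<Sum>b\<in>Z. a b * b) ` (Z \<rightarrow>\<^sub>E K)"
  have "finite Rep" unfolding Rep_def using Z K_fin by (auto intro!: finite_PiE)
  moreover have "Rep \<subseteq> R" unfolding Rep_def using sumK_R Z by (auto simp: PiE_def Pi_def)
  moreover have "\<exists>s\<in>Rep. z - s \<in> P" if zR: "z \<in> R" for z
  proof -
    obtain a where a: "\<forall>b\<in>Z. a b \<in> K" "z - (\<Sum>b\<in>Z. a b * b) \<in> P" using bspec[OF Z(4) zR] by blast
    have "restrict a Z \<in> Z \<rightarrow>\<^sub>E K" using a by auto
    then have "(\<lambda>a. \<Sum>b\<in>Z. a b * b) (restrict a Z) \<in> Rep" unfolding Rep_def by (rule imageI)
    moreover have "(\<Sum>b\<in>Z. restrict a Z b * b) = (\<Sum>b\<in>Z. a b * b)" by (rule sum.cong) auto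
    ultimately have "(\<Sum>b\<in>Z. a b * b) \<in> Rep" by simp
    then show ?thesis using a(2) by blast
  qed
  ultimately show ?thesis by blast
qed

lemma rational_eval:
  assumes d: "deg_place K R = 1" and z: "z \<in> R"
  shows "\<exists>c\<in>K. z - c \<in> P"
proof -
  obtain Z where Z: "finite Z" "Z \<subseteq> R" "indepP Z" "\<forall>z\<in>R. \<exists>a. (\<forall>b\<in>Z. a b \<in> K) \<and> z - (\<Sum>b\<in>Z. a b * b) \<in> P"
    using basis by blast
  define g where "g a = cosP (\<Sum>b\<in>Z. a b * b)" for a
  have inj: "inj_on g (Z \<rightarrow>\<^sub>E K)"
  proof (rule inj_onI)
    fix a a' assume a: "a \<in> Z \<rightarrow>\<^sub>E K" "a' \<in> Z \<rightarrow>\<^sub>E K" "g a = g a'"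
    have "(\<Sum>b\<in>Z. a b * b) - (\<Sum>b\<in>Z. a' b * b) \<in> P" by (rule cosP_eqD[OF a(3)[unfolded g_def]])
    then have "(\<Sum>b\<in>Z. (a b - a' b) * b) \<in> P" by (simp add: sum_subtractf left_diff_distrib)
    moreover have "\<forall>b\<in>Z. a b - a' b \<in> K" using a sf_diff[OF K_sf] by (auto simp: PiE_def Pi_def)
    ultimately have "\<forall>b\<in>Z. a b - a' b = 0" using spec[OF Z(3)[unfolded indepP_def], of "\<lambda>b. a b - a' b"] by simp
    then show "a = a'" using a by (intro PiE_ext[of a Z "\<lambda>_. K"]) auto
  qed
  have img: "g ` (Z \<rightarrow>\<^sub>E K) = residue_field R"
  proof
    show "g ` (Z \<rightarrow>\<^sub>E K) \<subseteq> residue_field R"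
      unfolding residue_field_cosP g_def using sumK_R Z by (auto simp: PiE_def Pi_def)
    show "residue_field R \<subseteq> g ` (Z \<rightarrow>\<^sub>E K)"
    proof
      fix X assume "X \<in> residue_field R"
      then obtain z where z: "z \<in> R" "X = cosP z" by (auto simp: residue_field_cosP)
      obtain a where a: "\<forall>b\<in>Z. a b \<in> K" "z - (\<Sum>b\<in>Z. a b * b) \<in> P" using bspec[OF Z(4) z(1)] by blast
      have "restrict a Z \<in> Z \<rightarrow>\<^sub>E K" using a by auto
      then have gi: "g (restrict a Z) \<in> g ` (Z \<rightarrow>\<^sub>E K)" by (rule imageI)
      have "(\<Sum>b\<in>Z. restrict a Z b * b) = (\<Sum>b\<in>Z. a b * b)" by (rule sum.cong) auto
      then have "g (restrict a Z) = cosP (\<Sum>b\<in>Z. a b * b)" unfolding g_def by simp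
      also have "\<dots> = X" using cosP_eq[OF a(2)] z(2) by simp
      finally show "X \<in> g ` (Z \<rightarrow>\<^sub>E K)" using gi by simp
    qed
  qed
  have "card (residue_field R) = card (Z \<rightarrow>\<^sub>E K)" using inj img card_image by metis
  also have "\<dots> = card K ^ card Z" using Z by (simp add: card_PiE)
  finally have cr: "card (residue_field R) = card K ^ card Z" .
  have "deg_place K R = card Z" unfolding deg_place_def
  proof (rule the_equality)
    show "card (residue_field R) = card K ^ card Z" by (rule cr)
    fix n assume "card (residue_field R) = card K ^ n"
    then show "n = card Z" using cr card_K power_inject_exp[of "card K" n "card Z"] by simp
  qed
  then have "card Z = 1" using d by simp
  then obtain b where b: "Z = {b}" by (rule card_1_singletonE)
  have ex1: "\<exists>a\<in>K. w - a * b \<in> P" if wR: "w \<in> R" for w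
  proof -
    obtain a where "\<forall>b\<in>Z. a b \<in> K" "w - (\<Sum>b\<in>Z. a b * b) \<in> P" using bspec[OF Z(4) wR] by blast
    then show ?thesis using b by auto
  qed
  obtain a1 where a1: "a1 \<in> K" "1 - a1 * b \<in> P" using ex1 R_1 by blast
  have a1nz: "a1 \<noteq> 0" using a1 one_notin_P by auto
  obtain az where az: "az \<in> K" "z - az * b \<in> P" using ex1 z by blast
  have "b - inverse a1 = - inverse a1 * (1 - a1 * b)" using a1nz by (simp add: field_simps)
  moreover have "inverse a1 \<in> R" using a1 K_R sf_inverse[OF K_sf] by auto
  then have "- inverse a1 * (1 - a1 * b) \<in> P" using RP_mult[OF R_uminus a1(2)] by blast
  ultimately have "b - inverse a1 \<in> P" by simp
  then have "az * (b - inverse a1) \<in> P" using RP_mult az K_R by auto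
  then have "(z - az * b) + az * (b - inverse a1) \<in> P" using az P_add by blast
  moreover have "(z - az * b) + az * (b - inverse a1) = z - az * inverse a1" by (simp add: algebra_simps)
  moreover have "az * inverse a1 \<in> K" using az a1 sf_mult[OF K_sf] sf_inverse[OF K_sf] by auto
  ultimately show ?thesis by auto
qed

end



lemma spn_times:
  assumes L: "subfield L" and v: "v \<in> spn L E" and eb: "\<And>e. e \<in> E \<Longrightarrow> e * b \<in> spn L C"
  shows "v * b \<in> spn L C"
proof -
  obtain c where c: "v = (\<Sum>e\<in>E. c e * e)" "\<forall>e\<in>E. c e \<in> L" using v unfolding spn_def by blast
  have "v * b = (\<Sum>e\<in>E. c e * (e * b))" using c by (simp add: sum_distrib_right mult.assoc)
  also have "\<dots> \<in> spn L C"
  proof (rule spn_sum[OF L])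
    fix e assume "e \<in> E"
    then show "c e * (e * b) \<in> spn L C" using spn_smult[OF eb[of e] _ L] c(2) by blast
  qed
  finally show ?thesis .
qed

context vring begin

lemma powP: "w \<in> P \<Longrightarrow> n \<ge> 1 \<Longrightarrow> w ^ n \<in> P"
proof -
  assume w: "w \<in> P" and n: "n \<ge> 1"
  then obtain m where "n = Suc m" by (cases n) auto
  then show ?thesis using PR_mult[OF w R_power[OF P_R[OF w], of m]] by simp
qed

lemma good_exists: "\<exists>y C. good K R y C"
proof -
  obtain x0 B where x0: "\<not> algebraic_over K x0" "finite B" "\<forall>z. z \<in> spn (field_adj K x0) B"
    using x0_ex by blast
  show ?thesis
  proof (cases "x0 \<in> R")
    case False
    define y where "y = inverse x0"
    have yP: "y \<in> P" using notR_inv_P False y_def by simp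
    have ynz: "y \<noteq> 0" using False R_0 y_def by auto
    have "inverse y \<in> field_adj K y" by (rule sf_inverse[OF field_adj_subfield field_adj_x])
    then have "x0 \<in> field_adj K y" using y_def by simp
    then have "field_adj K x0 \<subseteq> field_adj K y"
      by (rule field_adj_min[OF field_adj_subfield field_adj_K])
    then have "\<forall>z. z \<in> spn (field_adj K y) B" using x0(3) spn_mono_field by blast
    then have "good K R y B" using yP ynz x0(2)
      by (intro good.intro vring_axioms good_axioms.intro) auto
    then show ?thesis by blast
  next
    case True
    have "\<exists>p. pc K p \<and> poly p x0 \<in> P \<and> poly p x0 \<noteq> 0"
    proof (rule ccontr)
      assume nop: "\<not> ?thesis"
      have pu: "isunit R (poly p x0)" if "pc K p" "poly p x0 \<noteq> 0" for p
        using nop that R_poly True R_notP_unit by blast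
      have Lu: "a \<in> R \<and> (a \<noteq> 0 \<longrightarrow> isunit R a)" if aL: "a \<in> field_adj K x0" for a
      proof -
        obtain p q where pq: "a = poly p x0 / poly q x0" "pc K p" "pc K q" "poly q x0 \<noteq> 0"
          using aL field_adj_Quot[OF K_sf] unfolding Quot_def by blast
        have qu: "isunit R (inverse (poly q x0))" using pu pq isunit_inverse by blast
        show ?thesis
        proof (cases "poly p x0 = 0")
          case True then show ?thesis using pq R_0 by simp
        next
          case False
          then have "isunit R a" using pu[OF pq(2) False] qu isunit_mult pq(1) by (simp add: divide_inverse)
          then show ?thesis by (simp add: isunit_R)
        qed
      qed
      obtain z where z: "z \<notin> R" using R_ne by auto
      define w where "w = inverse z"
      have wP: "w \<in> P" using notR_inv_P z w_def by simp
      have znz: "z \<noteq> 0" using z R_0 by auto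
      define N where "N = card B"
      obtain c where c: "\<forall>k\<in>{..N}. c k \<in> field_adj K x0" "\<exists>k\<in>{..N}. c k \<noteq> 0"
          "(\<Sum>k\<in>{..N}. c k * z ^ k) = 0"
        using steinitz[OF field_adj_subfield[of K x0] x0(2), of "{..N}" "\<lambda>k. z ^ k"] x0(3) N_def by auto
      define S where "S = {k. k \<le> N \<and> c k \<noteq> 0}"
      have Sfin: "finite S" "S \<noteq> {}" using c(2) by (auto simp: S_def)
      define M where "M = Max S"
      have M: "M \<le> N" "c M \<noteq> 0" using Max_in[OF Sfin] by (auto simp: M_def S_def)
      have cz: "c k = 0" if "M < k" "k \<le> N" for k
      proof (rule ccontr)
        assume "c k \<noteq> 0"
        then have "k \<in> S" using that by (simp add: S_def)
        then have "k \<le> M" using Max_ge[OF Sfin(1)] M_def by simp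
        with that show False by simp
      qed
      define tm where "tm k = (if M < k then 0 else c k * w ^ (M - k))" for k
      have "(\<Sum>k\<in>{..N}. c k * z ^ k) * w ^ M = (\<Sum>k\<in>{..N}. tm k)"
        unfolding sum_distrib_right
      proof (rule sum.cong)
        fix k assume k: "k \<in> {..N}"
        show "c k * z ^ k * w ^ M = tm k"
        proof (cases "M < k")
          case True then show ?thesis using cz k by (simp add: tm_def)
        next
          case False
          then have "w ^ M = w ^ k * w ^ (M - k)" by (simp flip: power_add)
          moreover have "z ^ k * w ^ k = 1" using znz by (simp add: w_def power_mult_distrib[symmetric])
          ultimately show ?thesis using False by (simp add: tm_def mult_ac)
        qed
      qed simp
      then have "(\<Sum>k\<in>{..N}. tm k) = 0" using c(3) by simp
      then have "tm M + (\<Sum>k\<in>{..N}-{M}. tm k) = 0" using M by (simp add: sum.remove)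
      then have cM: "c M = - (\<Sum>k\<in>{..N}-{M}. tm k)" by (simp add: tm_def eq_neg_iff_add_eq_0)
      have "(\<Sum>k\<in>{..N}-{M}. tm k) \<in> P"
      proof (rule P_sum)
        fix k assume k: "k \<in> {..N}-{M}"
        show "tm k \<in> P"
        proof (cases "M < k")
          case True then show ?thesis by (simp add: tm_def P_0)
        next
          case False
          then have "M - k \<ge> 1" using k by auto
          then have "w ^ (M - k) \<in> P" using powP wP by blast
          moreover have "c k \<in> R" using Lu c(1) k by auto
          ultimately show ?thesis using RP_mult False by (simp add: tm_def)
        qed
      qed
      then have "c M \<in> P" using cM P_uminus by simp
      moreover have "isunit R (c M)" using Lu c(1) M by auto
      ultimately show False using isunit_notP by blast
    qed
    then obtain p0 where p0: "pc K p0" "poly p0 x0 \<in> P" "poly p0 x0 \<noteq> 0" by blast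
    define d where "d = degree p0"
    have dpos: "d \<ge> 1"
    proof (rule ccontr)
      assume "\<not> d \<ge> 1"
      then have "d = 0" by simp
      then have "poly p0 x0 = coeff p0 0" by (simp add: poly_altdef d_def)
      then have "isunit R (poly p0 x0)" using K_unit pc_coeff[OF p0(1)] p0(3) by simp
      then show False using p0(2) isunit_notP by blast
    qed
    define lc where "lc = lead_coeff p0"
    have lc: "lc \<in> K" "lc \<noteq> 0" using pc_coeff[OF p0(1)] p0(3) by (auto simp: lc_def)
    define p where "p = smult (inverse lc) p0"
    have p: "pc K p" "degree p = d" "coeff p d = 1"
      using lc p0(1) sf_inverse[OF K_sf] by (auto simp: p_def d_def lc_def intro!: sf_pc_smult[OF K_sf])
    define y where "y = poly p x0"
    have ynz: "y \<noteq> 0" using p0 lc by (simp add: y_def p_def)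
    have yP: "y \<in> P" using RP_mult[of "inverse lc" "poly p0 x0"] p0 lc K_R sf_inverse[OF K_sf]
      by (auto simp: y_def p_def)
    define L where "L = field_adj K y"
    have Lsf: "subfield L" by (simp add: L_def field_adj_subfield)
    have yL: "y \<in> L" by (simp add: L_def field_adj_x)
    have KL: "K \<subseteq> L" by (simp add: L_def field_adj_K)
    define E where "E = (\<lambda>j. x0 ^ j) ` {..<d}"
    have Efin: "finite E" by (simp add: E_def)
    have cardE: "card E \<le> d" unfolding E_def using card_image_le[of "{..<d}" "\<lambda>j. x0 ^ j"] by simp
    define V where "V = spn L E"
    have pw: "x0 ^ j \<in> V" if "j < d" for j
      unfolding V_def by (rule spn_base[OF Efin _ Lsf]) (use that in \<open>simp add: E_def\<close>)
    have one: "1 \<in> V" using pw[of 0] dpos by simp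
    have LV: "a \<in> V" if "a \<in> L" for a using spn_smult[OF one[unfolded V_def] that Lsf] by (simp add: V_def)
    have xd: "x0 ^ d \<in> V"
    proof -
      have "y = (\<Sum>i<Suc d. coeff p i * x0 ^ i)" using p by (simp add: y_def poly_altdef lessThan_Suc_atMost)
      also have "\<dots> = (\<Sum>i<d. coeff p i * x0 ^ i) + x0 ^ d" using p by simp
      finally have "x0 ^ d = y - (\<Sum>i<d. coeff p i * x0 ^ i)" by simp
      moreover have "(\<Sum>i<d. coeff p i * x0 ^ i) \<in> V" unfolding V_def
        using pw pc_coeff[OF p(1)] KL Lsf by (auto intro!: spn_sum spn_smult simp: V_def)
      ultimately show ?thesis using LV[OF yL] spn_diff Lsf by (simp add: V_def)
    qed
    have xmul: "x0 * v \<in> V" if "v \<in> V" for v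
    proof -
      have "v * x0 \<in> V" unfolding V_def
      proof (rule spn_times[OF Lsf that[unfolded V_def]])
        fix e assume "e \<in> E"
        then obtain j where j: "j < d" "e = x0 ^ j" by (auto simp: E_def)
        show "e * x0 \<in> spn L E"
        proof (cases "Suc j < d")
          case True then have "x0 ^ Suc j \<in> V" by (rule pw)
          then show ?thesis using j by (simp add: V_def mult.commute)
        next
          case False then have "Suc j = d" using j by simp
          then have "x0 ^ Suc j \<in> V" using xd by simp
          then show ?thesis using j by (simp add: V_def mult.commute)
        qed
      qed
      then show ?thesis by (simp add: mult.commute)
    qed
    have xpmul: "v * x0 ^ j \<in> V" if "v \<in> V" for v j
  proof (induction j)
    case (Suc j)
    then have "x0 * (v * x0 ^ j) \<in> V" using xmul by blast
    then show ?case by (simp add: mult_ac)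
  qed (use that in simp)
    have mul: "u * v \<in> V" if "u \<in> V" "v \<in> V" for u v
    proof -
      have "v * u \<in> V" unfolding V_def
      proof (rule spn_times[OF Lsf that(2)[unfolded V_def]])
        fix e assume "e \<in> E"
        then obtain j where j: "j < d" "e = x0 ^ j" by (auto simp: E_def)
        show "e * u \<in> spn L E" using xpmul[OF that(1), of j] j by (simp add: V_def mult.commute)
      qed
      then show ?thesis by (simp add: mult.commute)
    qed
    have vpow: "v ^ k \<in> V" if "v \<in> V" for v k using that by (induction k) (auto intro: one mul)
    have inv: "inverse v \<in> V" if v: "v \<in> V" "v \<noteq> 0" for v
    proof -
      obtain c where c: "\<forall>k\<in>{..d}. c k \<in> L" "\<exists>k\<in>{..d}. c k \<noteq> 0" "(\<Sum>k\<in>{..d}. c k * v ^ k) = 0"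
        using steinitz[OF Lsf Efin, of "{..d}" "\<lambda>k. v ^ k"] cardE vpow[OF v(1)] by (auto simp: V_def)
      define S where "S = {k. k \<le> d \<and> c k \<noteq> 0}"
      have Sfin: "finite S" "S \<noteq> {}" using c(2) by (auto simp: S_def)
      define k0 where "k0 = Min S"
      have k0: "k0 \<le> d" "c k0 \<noteq> 0" using Min_in[OF Sfin] by (auto simp: k0_def S_def)
      have k0min: "c k = 0" if "k < k0" for k
      proof (rule ccontr)
        assume "c k \<noteq> 0"
        then have "k \<in> S" using that k0 by (simp add: S_def)
        then have "k0 \<le> k" using Min_le[OF Sfin(1)] k0_def by simp
        with that show False by simp
      qed
      define tm where "tm k = (if k < k0 then 0 else c k * v ^ (k - k0))" for k
      have "(\<Sum>k\<in>{..d}. c k * v ^ k) = (\<Sum>k\<in>{..d}. tm k) * v ^ k0"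
        unfolding sum_distrib_right
      proof (rule sum.cong)
        fix k assume k: "k \<in> {..d}"
        show "c k * v ^ k = tm k * v ^ k0"
        proof (cases "k < k0")
          case True then show ?thesis using k0min by (simp add: tm_def)
        next
          case False
          then have "v ^ k = v ^ (k - k0) * v ^ k0" by (simp flip: power_add)
          then show ?thesis using False by (simp add: tm_def mult_ac)
        qed
      qed simp
      then have "(\<Sum>k\<in>{..d}. tm k) = 0" using c(3) v(2) by simp
      then have "tm k0 + (\<Sum>k\<in>{..d}-{k0}. tm k) = 0" using k0 by (simp add: sum.remove)
      then have ck0: "c k0 = - (\<Sum>k\<in>{..d}-{k0}. tm k)" by (simp add: tm_def eq_neg_iff_add_eq_0)
      define S' where "S' = (\<Sum>k\<in>{..d}-{k0}. (if k < k0 then 0 else c k * v ^ (k - k0 - 1)))"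
      have "(\<Sum>k\<in>{..d}-{k0}. tm k) = v * S'"
        unfolding S'_def sum_distrib_left
      proof (rule sum.cong)
        fix k assume k: "k \<in> {..d}-{k0}"
        show "tm k = v * (if k < k0 then 0 else c k * v ^ (k - k0 - 1))"
        proof (cases "k < k0")
          case False
          then have "k - k0 = Suc (k - k0 - 1)" using k by auto
          then have "v ^ (k - k0) = v * v ^ (k - k0 - 1)" by (metis power_Suc)
          then show ?thesis using False by (simp add: tm_def mult_ac)
        qed (simp add: tm_def)
      qed simp
      then have "c k0 = - (v * S')" using ck0 by simp
      then have "inverse v = (- inverse (c k0)) * S'" using v(2) k0(2) by (simp add: field_simps)
      moreover have "S' \<in> V" unfolding S'_def V_def
      proof (rule spn_sum[OF Lsf])
        fix k assume k: "k \<in> {..d}-{k0}"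
        show "(if k < k0 then 0 else c k * v ^ (k - k0 - 1)) \<in> spn L E"
          using spn_0[OF Lsf] spn_smult[OF vpow[OF v(1), of "k - k0 - 1", unfolded V_def] _ Lsf] c(1) k by auto
      qed
      moreover have "- inverse (c k0) \<in> L" using c(1) k0 Lsf by (auto intro: sf_uminus sf_inverse)
      ultimately show ?thesis using spn_smult[of S' L E "- inverse (c k0)"] Lsf by (simp add: V_def)
    qed
    have Vsf: "subfield V" unfolding subfield_def
      using spn_0[OF Lsf] one spn_add[OF _ _ Lsf] mul spn_uminus[OF _ Lsf] inv by (simp add: V_def)
    have x0V: "x0 \<in> V" using xpmul[OF one, of 1] by simp
    have adjV: "field_adj K x0 \<subseteq> V"
      by (rule field_adj_min[OF Vsf]) (use KL LV x0V in auto)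
    define C where "C = (\<lambda>(j, b). x0 ^ j * b) ` ({..<d} \<times> B)"
    have Cfin: "finite C" using x0(2) by (simp add: C_def)
    have "z \<in> spn L C" for z
    proof -
      obtain c where c: "z = (\<Sum>b\<in>B. c b * b)" "\<forall>b\<in>B. c b \<in> field_adj K x0"
        using x0(3) unfolding spn_def by blast
      have "c b * b \<in> spn L C" if "b \<in> B" for b
      proof (rule spn_times[OF Lsf])
        show "c b \<in> spn L E" using c(2) that adjV by (auto simp: V_def)
        fix e assume "e \<in> E"
        then obtain j where j: "j < d" "e = x0 ^ j" by (auto simp: E_def)
        then have "e * b \<in> C" using that by (force simp: C_def)
        then show "e * b \<in> spn L C" by (rule spn_base[OF Cfin _ Lsf])
      qed
      then show ?thesis using c(1) Lsf by (auto intro: spn_sum)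
    qed
    then have "good K R y C" using yP ynz Cfin
      by (intro good.intro vring_axioms good_axioms.intro) (auto simp: L_def)
    then show ?thesis by blast
  qed
qed

end



definition goodp :: "'f::field set \<Rightarrow> 'f \<Rightarrow> 'f set \<Rightarrow> 'f set \<Rightarrow> bool" where
  "goodp K w S I \<longleftrightarrow> K \<subseteq> S \<and> (\<forall>a\<in>S. \<forall>b\<in>S. a + b \<in> S \<and> a * b \<in> S) \<and> (\<forall>a\<in>S. - a \<in> S) \<and>
     I \<subseteq> S \<and> 0 \<in> I \<and> (\<forall>a\<in>I. \<forall>b\<in>I. a + b \<in> I) \<and> (\<forall>a\<in>S. \<forall>b\<in>I. a * b \<in> I) \<and> w \<in> I \<and> 1 \<notin> I"

definition polyS :: "'f::field set \<Rightarrow> 'f \<Rightarrow> 'f set" where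
  "polyS A b = {poly p b | p. pc A p}"

locale zmax =
  fixes K :: "'f::field set" and w :: 'f and S :: "'f set" and I :: "'f set"
  assumes K: "subfield K" and gd: "goodp K w S I"
    and mx: "\<And>S' I'. goodp K w S' I' \<Longrightarrow> S \<subseteq> S' \<Longrightarrow> I \<subseteq> I' \<Longrightarrow> S' = S \<and> I' = I"
begin

lemma K_S: "K \<subseteq> S" using gd by (simp add: goodp_def)
lemma S_add: "a \<in> S \<Longrightarrow> b \<in> S \<Longrightarrow> a + b \<in> S" using gd by (simp add: goodp_def)
lemma S_mult: "a \<in> S \<Longrightarrow> b \<in> S \<Longrightarrow> a * b \<in> S" using gd by (simp add: goodp_def)
lemma S_uminus: "a \<in> S \<Longrightarrow> - a \<in> S" using gd by (simp add: goodp_def)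
lemma I_S: "a \<in> I \<Longrightarrow> a \<in> S" using gd by (auto simp: goodp_def)
lemma I_0: "0 \<in> I" using gd by (simp add: goodp_def)
lemma I_add: "a \<in> I \<Longrightarrow> b \<in> I \<Longrightarrow> a + b \<in> I" using gd by (simp add: goodp_def)
lemma SI_mult: "a \<in> S \<Longrightarrow> b \<in> I \<Longrightarrow> a * b \<in> I" using gd by (simp add: goodp_def)
lemma IS_mult: "a \<in> I \<Longrightarrow> b \<in> S \<Longrightarrow> a * b \<in> I" using SI_mult[of b a] by (simp add: mult.commute)
lemma w_I: "w \<in> I" using gd by (simp add: goodp_def)
lemma one_I: "1 \<notin> I" using gd by (simp add: goodp_def)
lemma S_0: "0 \<in> S" using K_S sf_0[OF K] by auto
lemma S_1: "1 \<in> S" using K_S sf_1[OF K] by auto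
lemma I_uminus: "a \<in> I \<Longrightarrow> - a \<in> I" using SI_mult[OF S_uminus[OF S_1], of a] by simp
lemma I_diff: "a \<in> I \<Longrightarrow> b \<in> I \<Longrightarrow> a - b \<in> I" using I_add[of a "- b"] I_uminus[of b] by simp
lemma S_diff: "a \<in> S \<Longrightarrow> b \<in> S \<Longrightarrow> a - b \<in> S" using S_add[of a "- b"] S_uminus[of b] by simp

lemma I_max: "s \<in> S \<Longrightarrow> s \<notin> I \<Longrightarrow> \<exists>r\<in>S. 1 - s * r \<in> I"
proof (rule ccontr)
  assume s: "s \<in> S" "s \<notin> I" and nr: "\<not> (\<exists>r\<in>S. 1 - s * r \<in> I)"
  define J where "J = {i + s * r | i r. i \<in> I \<and> r \<in> S}"
  have IJ: "I \<subseteq> J" unfolding J_def by (force intro: S_0)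
  have "goodp K w S J" unfolding goodp_def
  proof (intro conjI)
    show "K \<subseteq> S" by (rule K_S)
    show "\<forall>a\<in>S. \<forall>b\<in>S. a + b \<in> S \<and> a * b \<in> S" using S_add S_mult by blast
    show "\<forall>a\<in>S. - a \<in> S" using S_uminus by blast
    show "J \<subseteq> S" unfolding J_def using I_S S_add S_mult s by blast
    show "0 \<in> J" using IJ I_0 by blast
    show "\<forall>a\<in>J. \<forall>b\<in>J. a + b \<in> J"
    proof (intro ballI)
      fix a b assume "a \<in> J" "b \<in> J"
      then obtain i r i' r' where "i \<in> I" "r \<in> S" "i' \<in> I" "r' \<in> S" "a = i + s * r" "b = i' + s * r'"
        unfolding J_def by blast
      then have "a + b = (i + i') + s * (r + r')" "i + i' \<in> I" "r + r' \<in> S"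
        using I_add S_add by (auto simp: algebra_simps)
      then show "a + b \<in> J" unfolding J_def by blast
    qed
    show "\<forall>a\<in>S. \<forall>b\<in>J. a * b \<in> J"
    proof (intro ballI)
      fix a b assume "a \<in> S" "b \<in> J"
      then obtain i r where "i \<in> I" "r \<in> S" "b = i + s * r" unfolding J_def by blast
      then have "a * b = a * i + s * (a * r)" "a * i \<in> I" "a * r \<in> S"
        using SI_mult S_mult \<open>a \<in> S\<close> by (auto simp: algebra_simps)
      then show "a * b \<in> J" unfolding J_def by blast
    qed
    show "w \<in> J" using IJ w_I by blast
    show "1 \<notin> J"
    proof
      assume "1 \<in> J"
      then obtain i r where "i \<in> I" "r \<in> S" "1 = i + s * r" unfolding J_def by blast
      then have "1 - s * r \<in> I" by (metis add_diff_cancel_right')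
      then show False using nr \<open>r \<in> S\<close> by blast
    qed
  qed
  then have "J = I" using mx[of S J] IJ by blast
  moreover have "s = 0 + s * 1" by simp
  then have "s \<in> J" unfolding J_def using I_0 S_1 by blast
  ultimately show False using s by blast
qed

lemma I_prime: "a \<in> S \<Longrightarrow> b \<in> S \<Longrightarrow> a * b \<in> I \<Longrightarrow> a \<notin> I \<Longrightarrow> b \<in> I"
proof -
  assume a: "a \<in> S" "b \<in> S" "a * b \<in> I" "a \<notin> I"
  obtain r where r: "r \<in> S" "1 - a * r \<in> I" using I_max a by blast
  have "b = b * (1 - a * r) + (a * b) * r" by (simp add: algebra_simps)
  moreover have "b * (1 - a * r) \<in> I" using SI_mult a r by blast
  moreover have "(a * b) * r \<in> I" using IS_mult a r by blast
  ultimately show ?thesis using I_add by metis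
qed

lemma I_pow: "s \<in> S \<Longrightarrow> s \<notin> I \<Longrightarrow> s ^ n \<notin> I"
proof (induction n)
  case 0 then show ?case using one_I by simp
next
  case (Suc n)
  have "s ^ n \<in> S" using Suc.prems by (induction n) (auto intro: S_1 S_mult)
  then show ?case using I_prime[of s "s ^ n"] Suc by auto
qed

lemma S_pc_poly: "pc S p \<Longrightarrow> b \<in> S \<Longrightarrow> poly p b \<in> S"
  by (rule poly_closed) (auto intro: S_0 S_add S_mult)

lemma I_pc_poly: "pc I p \<Longrightarrow> b \<in> S \<Longrightarrow> poly p b \<in> I"
  by (rule poly_closed) (auto intro: I_0 I_add SI_mult)

lemma ext_goodp:
  assumes one: "1 \<notin> polyS I b"
  shows "goodp K w (polyS S b) (polyS I b)" "S \<subseteq> polyS S b" "I \<subseteq> polyS I b" "b \<in> polyS S b"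
proof -
  have cS: "pc S [:a:]" if "a \<in> S" for a by (rule pc_const[OF S_0 that])
  have cI: "pc I [:a:]" if "a \<in> I" for a by (rule pc_const[OF I_0 that])
  show SS: "S \<subseteq> polyS S b" unfolding polyS_def
  proof
    fix a assume "a \<in> S" then have "pc S [:a:]" "a = poly [:a:] b" using cS by auto
    then show "a \<in> {poly p b |p. pc S p}" by blast
  qed
  show II: "I \<subseteq> polyS I b" unfolding polyS_def
  proof
    fix a assume "a \<in> I" then have "pc I [:a:]" "a = poly [:a:] b" using cI by auto
    then show "a \<in> {poly p b |p. pc I p}" by blast
  qed
  have "pc S [:0, 1:]" using S_0 S_1 by (simp add: pc_pCons pc_0)
  moreover have "b = poly [:0, 1:] b" by simp
  ultimately show "b \<in> polyS S b" unfolding polyS_def by blast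
  show "goodp K w (polyS S b) (polyS I b)" unfolding goodp_def
  proof (intro conjI)
    show "K \<subseteq> polyS S b" using K_S SS by blast
    show "\<forall>x\<in>polyS S b. \<forall>y\<in>polyS S b. x + y \<in> polyS S b \<and> x * y \<in> polyS S b"
    proof (intro ballI conjI)
      fix x y assume "x \<in> polyS S b" "y \<in> polyS S b"
      then obtain p q where pq: "pc S p" "pc S q" "x = poly p b" "y = poly q b" unfolding polyS_def by blast
      have "pc S (p + q)" by (rule pc_add[OF _ pq(1,2)]) (rule S_add)
      then show "x + y \<in> polyS S b" using pq unfolding polyS_def by (auto intro!: exI[of _ "p + q"])
      have "pc S (p * q)" by (rule pc_mult[OF S_0 _ _ pq(1,2)]) (auto intro: S_add S_mult)
      then show "x * y \<in> polyS S b" using pq unfolding polyS_def by (auto intro!: exI[of _ "p * q"])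
    qed
    show "\<forall>x\<in>polyS S b. - x \<in> polyS S b"
    proof
      fix x assume "x \<in> polyS S b"
      then obtain p where p: "pc S p" "x = poly p b" unfolding polyS_def by blast
      have "pc S (- p)" by (rule pc_uminus[OF _ p(1)]) (rule S_uminus)
      then show "- x \<in> polyS S b" using p unfolding polyS_def by (auto intro!: exI[of _ "- p"])
    qed
    show "polyS I b \<subseteq> polyS S b" unfolding polyS_def using pc_mono[of I S] I_S by blast
    show "0 \<in> polyS I b" using II I_0 by blast
    show "\<forall>x\<in>polyS I b. \<forall>y\<in>polyS I b. x + y \<in> polyS I b"
    proof (intro ballI)
      fix x y assume "x \<in> polyS I b" "y \<in> polyS I b"
      then obtain p q where pq: "pc I p" "pc I q" "x = poly p b" "y = poly q b" unfolding polyS_def by blast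
      have "pc I (p + q)" by (rule pc_add[OF _ pq(1,2)]) (rule I_add)
      then show "x + y \<in> polyS I b" using pq unfolding polyS_def by (auto intro!: exI[of _ "p + q"])
    qed
    show "\<forall>x\<in>polyS S b. \<forall>y\<in>polyS I b. x * y \<in> polyS I b"
    proof (intro ballI)
      fix x y assume "x \<in> polyS S b" "y \<in> polyS I b"
      then obtain p q where pq: "pc S p" "pc I q" "x = poly p b" "y = poly q b" unfolding polyS_def by blast
      have "pc I (p * q)" by (rule pc_mult[OF I_0 _ _ pq(1,2)]) (auto intro: I_add SI_mult)
      then show "x * y \<in> polyS I b" using pq unfolding polyS_def by (auto intro!: exI[of _ "p * q"])
    qed
    show "w \<in> polyS I b" using II w_I by blast
    show "1 \<notin> polyS I b" by (rule one)
  qed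
qed

lemma unit_S: "s \<in> S \<Longrightarrow> s \<notin> I \<Longrightarrow> inverse s \<in> S"
proof -
  assume s: "s \<in> S" "s \<notin> I"
  have snz: "s \<noteq> 0" using s I_0 by auto
  have "1 \<notin> polyS I (inverse s)"
  proof
    assume "1 \<in> polyS I (inverse s)"
    then obtain p where p: "pc I p" "poly p (inverse s) = 1" unfolding polyS_def by auto
    have "poly (reflect_poly p) s = s ^ degree p" using poly_reflect_poly_nz[OF snz, of p] p by simp
    moreover have "pc I (reflect_poly p)" using p(1) I_0 by (auto simp: pc_def coeff_reflect_poly)
    ultimately have "s ^ degree p \<in> I" using I_pc_poly s by metis
    then show False using I_pow s by blast
  qed
  then have "polyS S (inverse s) = S" using ext_goodp mx by blast
  then show ?thesis using ext_goodp(4) \<open>1 \<notin> polyS I (inverse s)\<close> by blast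
qed

lemma core:
  assumes b: "b \<noteq> 0" and p: "pc I p" "poly p b = 1" and q: "pc I q" "poly q (inverse b) = 1"
    and deg: "degree q \<le> degree p"
  shows "\<exists>p'. pc I p' \<and> poly p' b = 1 \<and> degree p' < degree p"
proof -
  define m where "m = degree p"
  define n where "n = degree q"
  have nz: "n \<ge> 1"
  proof (rule ccontr)
    assume "\<not> n \<ge> 1"
    then have "n = 0" by simp
    then have "poly q (inverse b) = coeff q 0" by (simp add: poly_altdef n_def)
    then show False using q pc_coeff one_I by metis
  qed
  have mn: "n \<le> m" using deg by (simp add: m_def n_def)
  define q0 where "q0 = coeff q 0"
  have q0: "q0 \<in> I" using q pc_coeff q0_def by metis
  define u where "u = 1 - q0"
  have uS: "u \<in> S" using S_1 I_S q0 S_diff u_def by blast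
  have uI: "u \<notin> I"
  proof
    assume "u \<in> I"
    then have "u + q0 \<in> I" using q0 I_add by blast
    then show False using one_I u_def by simp
  qed
  have iu: "inverse u \<in> S" using unit_S uS uI by blast
  have unz: "u \<noteq> 0" using uI I_0 by auto
  define r0 where "r0 = reflect_poly q - monom q0 n"
  have pr0: "poly r0 b = u * b ^ n"
    using poly_reflect_poly_nz[OF b, of q] q by (simp add: r0_def poly_monom u_def n_def algebra_simps)
  have dr0: "degree r0 \<le> n - 1"
  proof (rule degree_le, intro allI impI)
    fix i assume "n - 1 < i"
    then have "i \<ge> n" by simp
    then show "coeff r0 i = 0" using nz
      by (auto simp: r0_def coeff_reflect_poly coeff_monom n_def q0_def)
  qed
  have pcr0: "pc I r0" unfolding r0_def
    by (rule pc_diff[OF I_diff]) (auto simp: pc_def coeff_reflect_poly coeff_monom q I_0 q0 pc_coeff[OF q(1)])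
  define r where "r = monom 1 (m - n) * smult (inverse u) r0"
  have bm: "b ^ m = b ^ (m - n) * b ^ n" using mn by (simp flip: power_add)
  have pr: "poly r b = b ^ m"
    using pr0 unz by (simp add: r_def poly_monom bm)
  have pcr: "pc I r" unfolding r_def
  proof (rule pc_mult[OF I_0 I_add _ _ pc_smult])
    show "pc S (monom 1 (m - n))" using S_0 S_1 by (rule pc_monom)
    show "\<And>a b. a \<in> S \<Longrightarrow> b \<in> I \<Longrightarrow> a * b \<in> I" by (rule SI_mult)
    show "\<And>b. b \<in> I \<Longrightarrow> inverse u * b \<in> I" using SI_mult iu by blast
    show "pc I r0" by (rule pcr0)
  qed
  have dr: "degree r < m"
  proof -
    have "degree r \<le> (m - n) + degree (smult (inverse u) r0)"
      unfolding r_def using degree_mult_le degree_monom_le by (meson add_le_mono le_trans order_refl)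
    also have "\<dots> \<le> (m - n) + (n - 1)" using degree_smult_le dr0 by (meson add_le_mono le_trans order_refl)
    also have "\<dots> < m" using nz mn by simp
    finally show ?thesis .
  qed
  define lc where "lc = coeff p m"
  have lc: "lc \<in> I" using p(1) pc_coeff lc_def by metis
  define pl where "pl = p - monom lc m"
  have m0: "m \<ge> 1"
  proof (rule ccontr)
    assume "\<not> m \<ge> 1"
    then have "m = 0" by simp
    then have "poly p b = coeff p 0" by (simp add: poly_altdef m_def)
    then show False using p pc_coeff one_I by metis
  qed
  have dpl: "degree pl < m"
  proof -
    have False: "m \<noteq> 0" using m0 by simp
    have "degree pl \<le> m - 1"
    proof (rule degree_le, intro allI impI)
      fix i assume "m - 1 < i"
      then have "i \<ge> m" by simp
      then show "coeff pl i = 0" using False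
        by (cases "i = m") (auto simp: pl_def lc_def coeff_monom m_def coeff_eq_0)
    qed
    then show ?thesis using False by simp
  qed
  define p' where "p' = pl + smult lc r"
  have "poly p b = poly pl b + lc * b ^ m" by (simp add: pl_def poly_monom)
  then have "poly p' b = 1" using p(2) pr by (simp add: p'_def)
  moreover have "pc I p'" unfolding p'_def
  proof (rule pc_add[OF I_add])
    show "pc I pl" unfolding pl_def by (rule pc_diff[OF I_diff p(1) pc_monom[OF I_0 lc]])
    show "pc I (smult lc r)" by (rule pc_smult[OF _ pcr]) (use IS_mult[OF lc] I_S in blast)
  qed
  moreover have "degree p' < m"
  proof -
    have "degree (smult lc r) < m" using degree_smult_le dr le_less_trans by blast
    moreover have "degree pl < m" using dpl by auto
    ultimately show ?thesis unfolding p'_def by (rule degree_add_less[rotated])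
  qed
  ultimately show ?thesis unfolding m_def by blast
qed

lemma valuation: "a \<noteq> 0 \<Longrightarrow> a \<in> S \<or> inverse a \<in> S"
proof (rule ccontr)
  assume a: "a \<noteq> 0" and na: "\<not> (a \<in> S \<or> inverse a \<in> S)"
  have ex: "\<exists>p. pc I p \<and> poly p c = 1" if "c \<notin> S" for c
  proof (rule ccontr)
    assume "\<not> ?thesis"
    then have "1 \<notin> polyS I c" unfolding polyS_def by auto
    then have "polyS S c = S" using ext_goodp mx by blast
    then show False using ext_goodp(4) \<open>1 \<notin> polyS I c\<close> that by blast
  qed
  obtain p0 where "pc I p0 \<and> poly p0 a = 1" using ex na by blast
  then obtain p where p: "pc I p" "poly p a = 1"
    and pmin: "\<And>p'. pc I p' \<and> poly p' a = 1 \<Longrightarrow> degree p \<le> degree p'"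
    using ex_has_least_nat[of "\<lambda>p. pc I p \<and> poly p a = 1" p0 degree] by blast
  obtain q0 where "pc I q0 \<and> poly q0 (inverse a) = 1" using ex na by blast
  then obtain q where q: "pc I q" "poly q (inverse a) = 1"
    and qmin: "\<And>q'. pc I q' \<and> poly q' (inverse a) = 1 \<Longrightarrow> degree q \<le> degree q'"
    using ex_has_least_nat[of "\<lambda>q. pc I q \<and> poly q (inverse a) = 1" q0 degree] by blast
  show False
  proof (cases "degree q \<le> degree p")
    case True
    then obtain p' where "pc I p'" "poly p' a = 1" "degree p' < degree p" using core[OF a p q] by blast
    then show False using pmin by fastforce
  next
    case False
    have ia: "inverse a \<noteq> 0" using a by simp
    have "poly p (inverse (inverse a)) = 1" using p by simp
    then obtain q' where "pc I q'" "poly q' (inverse a) = 1" "degree q' < degree q"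
      using core[OF ia q p(1)] False by auto
    then show False using qmin by fastforce
  qed
qed

end

context ffield begin

lemma place_exists:
  assumes z: "z \<notin> K"
  shows "\<exists>R. valuation_ring K R \<and> z \<notin> R"
proof -
  have znz: "z \<noteq> 0" using z K_0 by auto
  define w where "w = inverse z"
  have wK: "w \<notin> K" using z sf_inverse[OF K_sf, of w] znz by (auto simp: w_def)
  define S0 where "S0 = polyS K w"
  define I0 where "I0 = {w * s | s. s \<in> S0}"
  have g0: "goodp K w S0 I0" unfolding goodp_def
  proof (intro conjI)
    show "K \<subseteq> S0" unfolding S0_def polyS_def
    proof
      fix a assume "a \<in> K" then have "pc K [:a:]" "a = poly [:a:] w" using sf_pc_const[OF K_sf] by auto
      then show "a \<in> {poly p w |p. pc K p}" by blast
    qed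
    then have S00: "0 \<in> S0" "1 \<in> S0" using K_0 K_1 by auto
    show SS: "\<forall>a\<in>S0. \<forall>b\<in>S0. a + b \<in> S0 \<and> a * b \<in> S0"
    proof (intro ballI conjI)
      fix x y assume "x \<in> S0" "y \<in> S0"
      then obtain p q where pq: "pc K p" "pc K q" "x = poly p w" "y = poly q w" unfolding S0_def polyS_def by blast
      show "x + y \<in> S0" using pq sf_pc_add[OF K_sf pq(1,2)] unfolding S0_def polyS_def by (auto intro!: exI[of _ "p + q"])
      show "x * y \<in> S0" using pq sf_pc_mult[OF K_sf pq(1,2)] unfolding S0_def polyS_def by (auto intro!: exI[of _ "p * q"])
    qed
    show "\<forall>a\<in>S0. - a \<in> S0"
    proof
      fix x assume "x \<in> S0"
      then obtain p where p: "pc K p" "x = poly p w" unfolding S0_def polyS_def by blast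
      have "pc K (- p)" by (rule pc_uminus[OF sf_uminus[OF K_sf] p(1)])
      then show "- x \<in> S0" using p unfolding S0_def polyS_def by (auto intro!: exI[of _ "- p"])
    qed
    have wS: "w \<in> S0" unfolding S0_def polyS_def
      by (rule CollectI, rule exI[of _ "[:0, 1:]"]) (simp add: pc_pCons K_0 K_1 pc_0)
    show "I0 \<subseteq> S0" unfolding I0_def using SS wS by blast
    show "0 \<in> I0" unfolding I0_def using S00 by force
    show "\<forall>a\<in>I0. \<forall>b\<in>I0. a + b \<in> I0"
    proof (intro ballI)
      fix a b assume "a \<in> I0" "b \<in> I0"
      then obtain s s' where "s \<in> S0" "s' \<in> S0" "a = w * s" "b = w * s'" unfolding I0_def by blast
      then have "a + b = w * (s + s')" "s + s' \<in> S0" using SS by (auto simp: distrib_left)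
      then show "a + b \<in> I0" unfolding I0_def by blast
    qed
    show "\<forall>a\<in>S0. \<forall>b\<in>I0. a * b \<in> I0"
    proof (intro ballI)
      fix a b assume "a \<in> S0" "b \<in> I0"
      then obtain s where "s \<in> S0" "b = w * s" unfolding I0_def by blast
      then have "a * b = w * (a * s)" "a * s \<in> S0" using SS \<open>a \<in> S0\<close> by (auto simp: mult_ac)
      then show "a * b \<in> I0" unfolding I0_def by blast
    qed
    show "w \<in> I0" unfolding I0_def using S00 by force
    show "1 \<notin> I0"
    proof
      assume "1 \<in> I0"
      then obtain p where p: "pc K p" "1 = w * poly p w" unfolding I0_def S0_def polyS_def by blast
      have "poly (pCons (-1) p) w = 0" using p by simp
      moreover have "pc K (pCons (-1) p)" using p sf_uminus[OF K_sf K_1] by (simp add: pc_pCons)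
      moreover have "pCons (-1) p \<noteq> 0" by simp
      ultimately have "w \<in> K" using pc_alg by blast
      then show False using wK by simp
    qed
  qed
  define enc :: "'f set \<Rightarrow> 'f set \<Rightarrow> ('f + 'f) set" where "enc S I = Inl ` S \<union> Inr ` I" for S I
  define Sx :: "('f + 'f) set \<Rightarrow> 'f set" where "Sx X = {s. Inl s \<in> X}" for X
  define Ix :: "('f + 'f) set \<Rightarrow> 'f set" where "Ix X = {s. Inr s \<in> X}" for X
  have SxI: "Sx (enc S I) = S" "Ix (enc S I) = I" for S I by (auto simp: Sx_def Ix_def enc_def)
  have encX: "enc (Sx X) (Ix X) = X" for X
  proof
    show "enc (Sx X) (Ix X) \<subseteq> X" by (auto simp: enc_def Sx_def Ix_def)
    show "X \<subseteq> enc (Sx X) (Ix X)"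
    proof
      fix x assume "x \<in> X" then show "x \<in> enc (Sx X) (Ix X)" by (cases x) (auto simp: enc_def Sx_def Ix_def)
    qed
  qed
  define A where "A = {X. goodp K w (Sx X) (Ix X)}"
  have "\<exists>M\<in>A. \<forall>X\<in>A. M \<subseteq> X \<longrightarrow> X = M"
  proof (rule Zorn_Lemma2, intro ballI)
    fix C assume C: "C \<in> chains A"
    show "\<exists>U\<in>A. \<forall>X\<in>C. X \<subseteq> U"
    proof (cases "C = {}")
      case True
      then show ?thesis using g0 SxI by (intro bexI[of _ "enc S0 I0"]) (auto simp: A_def)
    next
      case False
      have CA: "C \<subseteq> A" using C chainsD2 by blast
      have two: "\<exists>X\<in>C. x \<in> X \<and> y \<in> X" if xy: "x \<in> \<Union>C" "y \<in> \<Union>C" for x y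
      proof -
        obtain X Y where "X \<in> C" "Y \<in> C" "x \<in> X" "y \<in> Y" using xy by blast
        then show ?thesis using chainsD[OF C, of X Y] by blast
      qed
      have gX: "goodp K w (Sx X) (Ix X)" if "X \<in> C" for X using CA that by (auto simp: A_def)
      have "goodp K w (Sx (\<Union>C)) (Ix (\<Union>C))" unfolding goodp_def
      proof (intro conjI)
        obtain X0 where X0: "X0 \<in> C" using False by blast
        show "K \<subseteq> Sx (\<Union>C)" using gX[OF X0] X0 by (auto simp: goodp_def Sx_def)
        show "\<forall>a\<in>Sx (\<Union>C). \<forall>b\<in>Sx (\<Union>C). a + b \<in> Sx (\<Union>C) \<and> a * b \<in> Sx (\<Union>C)"
        proof (intro ballI)
          fix a b assume "a \<in> Sx (\<Union>C)" "b \<in> Sx (\<Union>C)"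
          then obtain X where "X \<in> C" "Inl a \<in> X" "Inl b \<in> X" using two[of "Inl a" "Inl b"] by (auto simp: Sx_def)
          then have "a + b \<in> Sx X \<and> a * b \<in> Sx X" using gX[of X] by (auto simp: goodp_def Sx_def)
          then show "a + b \<in> Sx (\<Union>C) \<and> a * b \<in> Sx (\<Union>C)" using \<open>X \<in> C\<close> by (auto simp: Sx_def)
        qed
        show "\<forall>a\<in>Sx (\<Union>C). - a \<in> Sx (\<Union>C)"
        proof
          fix a assume "a \<in> Sx (\<Union>C)"
          then obtain X where X: "X \<in> C" "Inl a \<in> X" by (auto simp: Sx_def)
          then have "- a \<in> Sx X" using gX[of X] by (simp add: goodp_def Sx_def)
          then show "- a \<in> Sx (\<Union>C)" using X by (auto simp: Sx_def)
        qed
        show "Ix (\<Union>C) \<subseteq> Sx (\<Union>C)"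
        proof
          fix a assume "a \<in> Ix (\<Union>C)"
          then obtain X where X: "X \<in> C" "Inr a \<in> X" by (auto simp: Ix_def)
          then have "a \<in> Sx X" using gX[of X] by (auto simp: goodp_def Ix_def)
          then show "a \<in> Sx (\<Union>C)" using X by (auto simp: Sx_def)
        qed
        show "0 \<in> Ix (\<Union>C)" using gX[OF X0] X0 by (auto simp: goodp_def Ix_def)
        show "\<forall>a\<in>Ix (\<Union>C). \<forall>b\<in>Ix (\<Union>C). a + b \<in> Ix (\<Union>C)"
        proof (intro ballI)
          fix a b assume "a \<in> Ix (\<Union>C)" "b \<in> Ix (\<Union>C)"
          then obtain X where "X \<in> C" "Inr a \<in> X" "Inr b \<in> X" using two[of "Inr a" "Inr b"] by (auto simp: Ix_def)
          then have "a + b \<in> Ix X" using gX[of X] by (auto simp: goodp_def Ix_def)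
          then show "a + b \<in> Ix (\<Union>C)" using \<open>X \<in> C\<close> by (auto simp: Ix_def)
        qed
        show "\<forall>a\<in>Sx (\<Union>C). \<forall>b\<in>Ix (\<Union>C). a * b \<in> Ix (\<Union>C)"
        proof (intro ballI)
          fix a b assume "a \<in> Sx (\<Union>C)" "b \<in> Ix (\<Union>C)"
          then obtain X where "X \<in> C" "Inl a \<in> X" "Inr b \<in> X" using two[of "Inl a" "Inr b"] by (auto simp: Sx_def Ix_def)
          then have "a * b \<in> Ix X" using gX[of X] by (auto simp: goodp_def Sx_def Ix_def)
          then show "a * b \<in> Ix (\<Union>C)" using \<open>X \<in> C\<close> by (auto simp: Ix_def)
        qed
        show "w \<in> Ix (\<Union>C)" using gX[OF X0] X0 by (auto simp: goodp_def Ix_def)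
        show "1 \<notin> Ix (\<Union>C)" using gX by (auto simp: goodp_def Ix_def)
      qed
      then show ?thesis by (intro bexI[of _ "\<Union>C"]) (auto simp: A_def)
    qed
  qed
  then obtain M where M: "M \<in> A" "\<And>X. X \<in> A \<Longrightarrow> M \<subseteq> X \<Longrightarrow> X = M" by blast
  define S where "S = Sx M"
  define I where "I = Ix M"
  have gM: "goodp K w S I" using M by (simp add: A_def S_def I_def)
  have zm: "zmax K w S I"
  proof
    show "subfield K" by (rule K_sf)
    show "goodp K w S I" by (rule gM)
    fix S' I' assume g': "goodp K w S' I'" and sub: "S \<subseteq> S'" "I \<subseteq> I'"
    have "enc S' I' \<in> A" using g' SxI by (simp add: A_def)
    moreover have "enc S I \<subseteq> enc S' I'" using sub by (auto simp: enc_def)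
    then have "M \<subseteq> enc S' I'" using encX[of M] by (simp add: S_def I_def)
    ultimately have "enc S' I' = M" using M by blast
    then show "S' = S \<and> I' = I" using SxI[of S' I'] by (simp add: S_def I_def)
  qed
  interpret zm: zmax K w S I by (rule zm)
  have "valuation_ring K S" unfolding valuation_ring_def
  proof (intro conjI)
    show "K \<subseteq> S" by (rule zm.K_S)
    show "S \<noteq> UNIV"
    proof
      assume "S = UNIV"
      then have "z * w \<in> I" using zm.SI_mult zm.w_I by blast
      then show False using zm.one_I znz by (simp add: w_def)
    qed
    show "\<forall>a\<in>S. \<forall>b\<in>S. a + b \<in> S \<and> a * b \<in> S \<and> - a \<in> S" using zm.S_add zm.S_mult zm.S_uminus by blast
    show "\<forall>z. z \<noteq> 0 \<longrightarrow> z \<in> S \<or> inverse z \<in> S" using zm.valuation by blast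
  qed
  moreover have "z \<notin> S"
  proof
    assume "z \<in> S"
    then have "z * w \<in> I" using zm.SI_mult zm.w_I by blast
    then show False using zm.one_I znz by (simp add: w_def)
  qed
  ultimately show ?thesis by blast
qed

end



context vring begin

lemma v_mult: "a \<noteq> 0 \<Longrightarrow> b \<noteq> 0 \<Longrightarrow> val R (a * b) = val R a + val R b"
  using good_exists good.val_mult by metis
lemma v_inverse: "a \<noteq> 0 \<Longrightarrow> val R (inverse a) = - val R a"
  using good_exists good.val_inverse by metis
lemma v_R: "z \<noteq> 0 \<Longrightarrow> z \<in> R \<longleftrightarrow> val R z \<ge> 0"
  using good_exists good.val_R by metis
lemma v_P: "z \<noteq> 0 \<Longrightarrow> z \<in> P \<longleftrightarrow> val R z \<ge> 1"
  using good_exists good.val_P by metis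
lemma v_uminus: "val R (- a) = val R a"
  using good_exists good.val_uminus by metis
lemma v_add: "a \<noteq> 0 \<Longrightarrow> b \<noteq> 0 \<Longrightarrow> a + b \<noteq> 0 \<Longrightarrow> val R (a + b) \<ge> min (val R a) (val R b)"
  using good_exists good.val_add by metis
lemma v_K: "a \<in> K \<Longrightarrow> a \<noteq> 0 \<Longrightarrow> val R a = 0"
  using good_exists good.val_K by metis
lemma v_unif: "\<exists>t. t \<noteq> 0 \<and> val R t = 1"
  using good_exists good.val_unif good.unif_nz by metis
lemma v_reps: "\<exists>Rep. finite Rep \<and> Rep \<subseteq> R \<and> (\<forall>z\<in>R. \<exists>s\<in>Rep. z - s \<in> P)"
  using good_exists good.reps by metis
lemma v_rational: "deg_place K R = 1 \<Longrightarrow> z \<in> R \<Longrightarrow> \<exists>c\<in>K. z - c \<in> P"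
  using good_exists good.rational_eval by metis

lemma v_add_ge: "a + b \<noteq> 0 \<Longrightarrow> (a = 0 \<or> val R a \<ge> k) \<Longrightarrow> (b = 0 \<or> val R b \<ge> k) \<Longrightarrow> val R (a + b) \<ge> k"
proof -
  assume ab: "a + b \<noteq> 0" "a = 0 \<or> val R a \<ge> k" "b = 0 \<or> val R b \<ge> k"
  show ?thesis
  proof (cases "a = 0 \<or> b = 0")
    case True then show ?thesis using ab by auto
  next
    case False then show ?thesis using ab v_add[of a b] by auto
  qed
qed

lemma v_power: "a \<noteq> 0 \<Longrightarrow> val R (a ^ n) = int n * val R a"
proof (induction n)
  case 0 then show ?case using v_K[OF K_1] by simp
next
  case (Suc n)
  then have "val R (a * a ^ n) = val R a + val R (a ^ n)" by (intro v_mult) auto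
  then show ?case using Suc by (simp add: algebra_simps)
qed

lemma eval_in: "deg_place K R = 1 \<Longrightarrow> z \<in> R \<Longrightarrow> eval_at K R z \<in> K \<and> z - eval_at K R z \<in> P"
  using v_rational eval_at_char by metis

end

context ffield begin

lemma place_vring: "R \<in> places K \<Longrightarrow> vring K R"
  unfolding places_def vring_def vring_axioms_def using ffield_axioms by simp

lemma L_mem: "f \<in> Lspace K E \<longleftrightarrow> f = 0 \<or> (\<forall>R\<in>places K. val R f + E R \<ge> 0)"
  by (auto simp: Lspace_def principal_div_def)

lemma L_0: "0 \<in> Lspace K E" by (simp add: L_mem)

lemma L_add: "f \<in> Lspace K E \<Longrightarrow> g \<in> Lspace K E \<Longrightarrow> f + g \<in> Lspace K E"
proof -
  assume f: "f \<in> Lspace K E" and g: "g \<in> Lspace K E"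
  show ?thesis unfolding L_mem
  proof (cases "f + g = 0")
    case False
    have "val R (f + g) + E R \<ge> 0" if R: "R \<in> places K" for R
    proof -
      interpret vring K R using place_vring R by blast
      have "val R (f + g) \<ge> - E R"
        by (rule v_add_ge[OF False]) (use f g R in \<open>auto simp: L_mem\<close>)
      then show ?thesis by simp
    qed
    then show "f + g = 0 \<or> (\<forall>R\<in>places K. val R (f + g) + E R \<ge> 0)" by blast
  qed simp
qed

lemma L_uminus: "f \<in> Lspace K E \<Longrightarrow> - f \<in> Lspace K E"
  unfolding L_mem using vring.v_uminus place_vring by fastforce

lemma L_diff: "f \<in> Lspace K E \<Longrightarrow> g \<in> Lspace K E \<Longrightarrow> f - g \<in> Lspace K E"
  using L_add[of f E "- g"] L_uminus[of g E] by simp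

lemma L_smult: "a \<in> K \<Longrightarrow> f \<in> Lspace K E \<Longrightarrow> a * f \<in> Lspace K E"
proof -
  assume a: "a \<in> K" and f: "f \<in> Lspace K E"
  show ?thesis
  proof (cases "a = 0 \<or> f = 0")
    case True then show ?thesis by (auto simp: L_mem)
  next
    case False
    have "val R (a * f) = val R f" if "R \<in> places K" for R
      using vring.v_mult[OF place_vring[OF that]] vring.v_K[OF place_vring[OF that] a] False by simp
    then show ?thesis using f False by (auto simp: L_mem)
  qed
qed

lemma L_mono: "(\<And>R. R \<in> places K \<Longrightarrow> E R \<le> E' R) \<Longrightarrow> Lspace K E \<subseteq> Lspace K E'"
proof
  fix f assume le: "\<And>R. R \<in> places K \<Longrightarrow> E R \<le> E' R" and f: "f \<in> Lspace K E"
  show "f \<in> Lspace K E'" unfolding L_mem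
  proof (cases "f = 0")
    case False
    have "0 \<le> val R f + E' R" if R: "R \<in> places K" for R
    proof -
      have "0 \<le> val R f + E R" "E R \<le> E' R" using f False le R by (auto simp: L_mem)
      then show ?thesis by linarith
    qed
    then show "f = 0 \<or> (\<forall>R\<in>places K. 0 \<le> val R f + E' R)" by blast
  qed simp
qed

lemma L_zero_K: "Lspace K (\<lambda>_. 0) \<subseteq> K"
proof
  fix f assume f: "f \<in> Lspace K (\<lambda>_. 0)"
  show "f \<in> K"
  proof (rule ccontr)
    assume "f \<notin> K"
    then obtain R where R: "valuation_ring K R" "f \<notin> R" using place_exists by blast
    then have Rp: "R \<in> places K" by (simp add: places_def)
    have "f \<noteq> 0" using \<open>f \<notin> K\<close> K_0 by auto
    then have "val R f \<ge> 0" using f Rp by (auto simp: L_mem)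
    then have "f \<in> R" using vring.v_R[OF place_vring[OF Rp] \<open>f \<noteq> 0\<close>] by simp
    then show False using R by simp
  qed
qed

lemma L_step:
  assumes Q: "Q \<in> places K" and AQ: "A Q = int m + 1" and fin: "finite (Lspace K (A(Q := int m)))"
  shows "finite (Lspace K A)"
proof -
  interpret q: vring K Q using Q place_vring by blast
  obtain t where t: "t \<noteq> 0" "val Q t = 1" using q.v_unif by blast
  obtain Rep where Rep: "finite Rep" "Rep \<subseteq> Q" "\<forall>z\<in>Q. \<exists>s\<in>Rep. z - s \<in> place_ideal Q"
    using q.v_reps by blast
  define A' where "A' = A(Q := int m)"
  define T where "T = t ^ Suc m"
  have T: "T \<noteq> 0" "val Q T = int m + 1" using t q.v_power[of t "Suc m"] by (auto simp: T_def)
  have TQ: "T * f \<in> Q" if f: "f \<in> Lspace K A" for f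
  proof (cases "f = 0")
    case True then show ?thesis using q.R_0 by simp
  next
    case False
    then have "val Q f + A Q \<ge> 0" using f Q by (auto simp: L_mem)
    then have "val Q (T * f) \<ge> 0" using q.v_mult[OF T(1) False] T AQ by simp
    then show ?thesis using q.v_R T False by simp
  qed
  define \<phi> where "\<phi> f = (SOME s. s \<in> Rep \<and> T * f - s \<in> place_ideal Q)" for f
  have \<phi>: "\<phi> f \<in> Rep \<and> T * f - \<phi> f \<in> place_ideal Q" if f: "f \<in> Lspace K A" for f
  proof -
    have "\<exists>s. s \<in> Rep \<and> T * f - s \<in> place_ideal Q" using Rep(3) TQ[OF f] by blast
    then show ?thesis unfolding \<phi>_def by (rule someI_ex)
  qed
  have diff: "f - g \<in> Lspace K A'" if fg: "f \<in> Lspace K A" "g \<in> Lspace K A" "\<phi> f = \<phi> g" for f g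
  proof -
    have d: "f - g \<in> Lspace K A" using L_diff fg by blast
    have "(T * f - \<phi> f) - (T * g - \<phi> g) \<in> place_ideal Q" using \<phi> fg q.P_diff by blast
    then have TP: "T * (f - g) \<in> place_ideal Q" using fg(3) by (simp add: algebra_simps)
    show ?thesis unfolding L_mem
    proof (cases "f - g = 0")
      case False
      have "val R (f - g) + A' R \<ge> 0" if R: "R \<in> places K" for R
      proof (cases "R = Q")
        case True
        have "val Q (T * (f - g)) \<ge> 1" using q.v_P TP T False by simp
        then show ?thesis using q.v_mult[OF T(1) False] T True by (simp add: A'_def)
      next
        case False
        then show ?thesis using d R \<open>f - g \<noteq> 0\<close> by (auto simp: L_mem A'_def)
      qed
      then show "f - g = 0 \<or> (\<forall>R\<in>places K. val R (f - g) + A' R \<ge> 0)" by blast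
    qed simp
  qed
  define rep where "rep s = (SOME f. f \<in> Lspace K A \<and> \<phi> f = s)" for s
  have "Lspace K A \<subseteq> (\<Union>s\<in>Rep. (\<lambda>h. rep s + h) ` Lspace K A')"
  proof
    fix f assume f: "f \<in> Lspace K A"
    have r: "rep (\<phi> f) \<in> Lspace K A \<and> \<phi> (rep (\<phi> f)) = \<phi> f"
      unfolding rep_def by (rule someI[of _ f]) (use f in simp)
    have "f - rep (\<phi> f) \<in> Lspace K A'" using diff[OF f] r by simp
    then have "f \<in> (\<lambda>h. rep (\<phi> f) + h) ` Lspace K A'" by (rule image_eqI[rotated]) simp
    then show "f \<in> (\<Union>s\<in>Rep. (\<lambda>h. rep s + h) ` Lspace K A')" using \<phi>[OF f] by blast
  qed
  moreover have "finite (\<Union>s\<in>Rep. (\<lambda>h. rep s + h) ` Lspace K A')"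
    using Rep(1) fin by (auto simp: A'_def)
  ultimately show ?thesis by (rule finite_subset)
qed

lemma L_fin_eff:
  assumes "finite S" "S \<subseteq> places K"
  shows "(\<forall>R. A R \<ge> 0) \<Longrightarrow> (\<forall>R. R \<notin> S \<longrightarrow> A R = 0) \<Longrightarrow> finite (Lspace K A)"
  using assms
proof (induction S arbitrary: A rule: finite_induct)
  case empty
  then have "A = (\<lambda>_. 0)" by auto
  then show ?case using L_zero_K finite_subset K_fin by metis
next
  case (insert Q S)
  have "\<forall>A. (\<forall>R. A R \<ge> 0) \<longrightarrow> (\<forall>R. R \<notin> insert Q S \<longrightarrow> A R = 0) \<longrightarrow> nat (A Q) = n \<longrightarrow> finite (Lspace K A)" for n
  proof (induction n)
    case 0
    show ?case
    proof (intro allI impI)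
      fix A assume A: "\<forall>R. A R \<ge> 0" "\<forall>R. R \<notin> insert Q S \<longrightarrow> A R = 0" "nat (A Q) = 0"
      then have "\<forall>R. R \<notin> S \<longrightarrow> A R = 0" by (metis insert_iff nat_0_iff order_antisym)
      then show "finite (Lspace K A)" using insert A by blast
    qed
  next
    case (Suc n)
    show ?case
    proof (intro allI impI)
      fix A assume A: "\<forall>R. A R \<ge> 0" "\<forall>R. R \<notin> insert Q S \<longrightarrow> A R = 0" "nat (A Q) = Suc n"
      then have AQ: "A Q = int n + 1" by (metis nat_eq_iff of_nat_Suc add.commute)
      have "finite (Lspace K (A(Q := int n)))" using Suc.IH A by auto
      have "Q \<in> places K" using insert by blast
      then show "finite (Lspace K A)" using L_step[of Q A n] AQ \<open>finite (Lspace K (A(Q := int n)))\<close> by blast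
    qed
  qed
  then show ?case using insert.prems by blast
qed

lemma L_fin_le:
  assumes le: "\<And>R. R \<in> places K \<Longrightarrow> E R \<le> A R" and A0: "\<forall>R. A R \<ge> 0"
    and fin: "finite {R. A R \<noteq> 0}" and pl: "{R. A R \<noteq> 0} \<subseteq> places K"
  shows "finite (Lspace K E)"
proof -
  have "finite (Lspace K A)" by (rule L_fin_eff[OF fin pl A0]) simp
  moreover have "Lspace K E \<subseteq> Lspace K A" by (rule L_mono) (rule le)
  ultimately show ?thesis using finite_subset by auto
qed

definition indK :: "'f set \<Rightarrow> bool" where
  "indK W \<longleftrightarrow> (\<forall>a. (\<forall>b\<in>W. a b \<in> K) \<longrightarrow> (\<Sum>b\<in>W. a b * b) = 0 \<longrightarrow> (\<forall>b\<in>W. a b = 0))"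

lemma subspace_card:
  assumes V: "finite V" "0 \<in> V" "\<And>a b. a \<in> V \<Longrightarrow> b \<in> V \<Longrightarrow> a + b \<in> V" "\<And>c a. c \<in> K \<Longrightarrow> a \<in> V \<Longrightarrow> c * a \<in> V"
  shows "\<exists>n. card V = card K ^ n"
proof -
  define g :: "'f set \<Rightarrow> ('f \<Rightarrow> 'f) \<Rightarrow> 'f" where "g W a = (\<Sum>b\<in>W. a b * b)" for W a
  have gV: "g W a \<in> V" if "W \<subseteq> V" "a \<in> W \<rightarrow>\<^sub>E K" for W a
    unfolding g_def
  proof (rule sum_closed[OF V(2) V(3)])
    fix i assume "i \<in> W"
    then show "a i * i \<in> V" using V(4) that by (auto simp: PiE_def Pi_def)
  qed
  have ginj: "inj_on (g W) (W \<rightarrow>\<^sub>E K)" if "indK W" for W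
  proof (rule inj_onI)
    fix a a' assume a: "a \<in> W \<rightarrow>\<^sub>E K" "a' \<in> W \<rightarrow>\<^sub>E K" "g W a = g W a'"
    then have "(\<Sum>b\<in>W. (a b - a' b) * b) = 0" by (simp add: g_def sum_subtractf left_diff_distrib)
    moreover have "\<forall>b\<in>W. a b - a' b \<in> K" using a sf_diff[OF K_sf] by (auto simp: PiE_def Pi_def)
    ultimately have "\<forall>b\<in>W. a b - a' b = 0" using spec[OF that[unfolded indK_def], of "\<lambda>b. a b - a' b"] by simp
    then show "a = a'" using a by (intro PiE_ext[of a W "\<lambda>_. K"]) auto
  qed
  have cW: "card K ^ card W \<le> card V" if W: "W \<subseteq> V" "indK W" for W
  proof -
    have fW: "finite W" using W V finite_subset by blast
    have "card K ^ card W = card (W \<rightarrow>\<^sub>E K)" using fW by (simp add: card_PiE)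
    also have "\<dots> = card (g W ` (W \<rightarrow>\<^sub>E K))" using card_image[OF ginj[OF W(2)]] by simp
    also have "\<dots> \<le> card V" using gV W V by (intro card_mono) auto
    finally show ?thesis .
  qed
  define Q where "Q W \<longleftrightarrow> W \<subseteq> V \<and> indK W" for W
  have Q0: "Q {}" by (simp add: Q_def indK_def)
  have bnd: "\<forall>W. Q W \<longrightarrow> card W < Suc (card V)"
  proof (intro allI impI)
    fix W assume "Q W"
    then have "card K ^ card W \<le> card V" using cW Q_def by blast
    moreover have "card W < 2 ^ card W" by (rule less_exp)
    moreover have "(2::nat) ^ card W \<le> card K ^ card W" using card_K by (rule power_mono) simp
    ultimately show "card W < Suc (card V)" by linarith
  qed
  obtain W where W: "Q W" and Wmax: "\<And>W'. Q W' \<Longrightarrow> card W' \<le> card W"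
    using ex_has_greatest_nat[of Q "{}" card "Suc (card V)", OF Q0 bnd] by blast
  have fW: "finite W" using W V finite_subset Q_def by blast
  have surj: "V \<subseteq> g W ` (W \<rightarrow>\<^sub>E K)"
  proof
    fix v assume v: "v \<in> V"
    show "v \<in> g W ` (W \<rightarrow>\<^sub>E K)"
    proof (rule ccontr)
      assume nv: "v \<notin> g W ` (W \<rightarrow>\<^sub>E K)"
      have vW: "v \<notin> W"
      proof
        assume "v \<in> W"
        define a :: "'f \<Rightarrow> 'f" where "a = (\<lambda>b. if b \<in> W then (if b = v then 1 else 0) else undefined)"
        have "a \<in> W \<rightarrow>\<^sub>E K" using K_0 K_1 by (auto simp: a_def)
        moreover have "g W a = v"
        proof -
          have "g W a = (\<Sum>b\<in>W. if b = v then b else 0)" unfolding g_def a_def by (rule sum.cong) auto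
          also have "\<dots> = v" using \<open>v \<in> W\<close> fW by (simp add: sum.delta')
          finally show ?thesis .
        qed
        ultimately show False using nv by blast
      qed
      have "indK (insert v W)" unfolding indK_def
      proof (intro allI impI)
        fix a assume aK: "\<forall>b\<in>insert v W. a b \<in> K" and s0: "(\<Sum>b\<in>insert v W. a b * b) = 0"
        have s: "a v * v + (\<Sum>b\<in>W. a b * b) = 0" using s0 vW fW by simp
        have av: "a v = 0"
        proof (rule ccontr)
          assume av: "a v \<noteq> 0"
          define a' :: "'f \<Rightarrow> 'f" where "a' = (\<lambda>b. if b \<in> W then - a b / a v else undefined)"
          have "a' \<in> W \<rightarrow>\<^sub>E K" using aK av sf_divide[OF K_sf] sf_uminus[OF K_sf] by (auto simp: a'_def)
          moreover have "g W a' = v"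
          proof -
            have "g W a' = (\<Sum>b\<in>W. - (a b * b) / a v)" unfolding g_def a'_def by (rule sum.cong) auto
            also have "\<dots> = - (\<Sum>b\<in>W. a b * b) / a v" by (simp add: sum_divide_distrib sum_negf)
            finally have e1: "g W a' = - (\<Sum>b\<in>W. a b * b) / a v" .
            have "- (\<Sum>b\<in>W. a b * b) = a v * v" using s by (metis add_eq_0_iff minus_minus)
            then show ?thesis using av e1 by simp
          qed
          ultimately show False using nv by blast
        qed
        then have "(\<Sum>b\<in>W. a b * b) = 0" using s by simp
        then have "\<forall>b\<in>W. a b = 0" using W aK unfolding Q_def indK_def by blast
        then show "\<forall>b\<in>insert v W. a b = 0" using av by simp
      qed
      then have "Q (insert v W)" using W v Q_def by auto
      then have "card (insert v W) \<le> card W" by (rule Wmax)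
      then show False using vW fW by simp
    qed
  qed
  have "g W ` (W \<rightarrow>\<^sub>E K) \<subseteq> V" using gV W Q_def by blast
  then have "V = g W ` (W \<rightarrow>\<^sub>E K)" using surj by blast
  then have "card V = card (W \<rightarrow>\<^sub>E K)" using card_image[OF ginj] W Q_def by auto
  then have "card V = card K ^ card W" using fW by (simp add: card_PiE)
  then show ?thesis by blast
qed

lemma ell_zero:
  assumes fin: "finite (Lspace K E)" and e: "ell K E = 0"
  shows "Lspace K E = {0}"
proof -
  obtain n where n: "card (Lspace K E) = card K ^ n"
    using subspace_card[OF fin L_0 L_add L_smult] by blast
  have "ell K E = n" unfolding ell_def
  proof (rule the_equality)
    show "card (Lspace K E) = card K ^ n" by (rule n)
    fix n' assume "card (Lspace K E) = card K ^ n'"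
    then show "n' = n" using n card_K power_inject_exp[of "card K" n' n] by simp
  qed
  then have "card (Lspace K E) = 1" using n e by simp
  then obtain x where "Lspace K E = {x}" by (rule card_1_singletonE)
  then show ?thesis using L_0[of E] by auto
qed

end



theorem corollary4p6:
  fixes K :: "'f::field set" and Ps :: "'f set set"
    and G H J :: "'f divisor" and f :: 'f
  assumes ff: "function_field K"
    and Ps: "Ps \<subset> rational_places K"
    and divs: "is_divisor K G" "is_divisor K H" "is_divisor K J"
    and degs: "deg_div K G \<le> deg_div K (sum_places Ps) - 1"
              "deg_div K H \<le> deg_div K (sum_places Ps) - 1"
              "deg_div K J \<le> deg_div K (sum_places Ps) - 1"
    and disj: "(supp G \<union> supp H \<union> supp J) \<inter> supp (sum_places Ps) = {}"
    and fL: "f \<in> Lspace K J" and fnz: "f \<noteq> 0"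
    and i: "ell K (gcd_div G (H - principal_div K f)) = 0"
    and ii: "ell K (lcm_div G (H - principal_div K f) - sum_places Ps) = 0"
  shows "AG_code K Ps G \<inter> cw_mult_code (ev_D K Ps f) (AG_code K Ps H) = {(\<lambda>_. 0)}"
proof -
  interpret ffield K by (rule ffield.intro[OF ff])
  define D where "D = sum_places Ps"
  define pf where "pf = principal_div K f"
  have Dv: "D R = (if R \<in> Ps then 1 else 0)" for R by (simp add: D_def sum_places_def)
  have Psr: "R \<in> places K" "deg_place K R = 1" if "R \<in> Ps" for R
    using Ps that by (auto simp: rational_places_def)
  have suppD: "supp D = Ps" by (auto simp: supp_def Dv)
  have zPs: "G R = 0" "H R = 0" "J R = 0" if R: "R \<in> Ps" for R
  proof -
    have "R \<in> supp (sum_places Ps)" using suppD R unfolding D_def by simp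
    then have "R \<notin> supp G \<union> supp H \<union> supp J" using disj by (metis IntI empty_iff)
    then show "G R = 0" "H R = 0" "J R = 0" by (auto simp: supp_def)
  qed
  have pfv: "pf R = val R f" if "R \<in> places K" for R using that by (simp add: pf_def principal_div_def)
  have fJ: "val R f + J R \<ge> 0" if "R \<in> places K" for R using fL fnz that by (auto simp: L_mem)
  define A where "A R = max (G R) 0 + max (H R) 0 + max (J R) 0" for R
  have A0: "\<forall>R. A R \<ge> 0" by (simp add: A_def)
  have Asub: "{R. A R \<noteq> 0} \<subseteq> {R. G R \<noteq> 0} \<union> {R. H R \<noteq> 0} \<union> {R. J R \<noteq> 0}"
    by (auto simp: A_def)
  have Afin: "finite {R. A R \<noteq> 0}"
    using divs Asub by (auto simp: is_divisor_def intro: finite_subset)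
  have Apl: "{R. A R \<noteq> 0} \<subseteq> places K"
    using divs Asub by (auto simp: is_divisor_def)
  have L1: "Lspace K (gcd_div G (H - pf)) = {0}"
  proof (rule ell_zero)
    show "ell K (gcd_div G (H - pf)) = 0" using i by (simp add: pf_def)
    show "finite (Lspace K (gcd_div G (H - pf)))"
      by (rule L_fin_le[OF _ A0 Afin Apl]) (auto simp: gcd_div_def A_def)
  qed
  have L2: "Lspace K (lcm_div G (H - pf) - D) = {0}"
  proof (rule ell_zero)
    show "ell K (lcm_div G (H - pf) - D) = 0" using ii by (simp add: pf_def D_def)
    show "finite (Lspace K (lcm_div G (H - pf) - D))"
    proof (rule L_fin_le[OF _ A0 Afin Apl])
      fix R assume R: "R \<in> places K"
      have "D R \<ge> 0" by (simp add: Dv)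
      moreover have "- pf R \<le> J R" using fJ[OF R] pfv[OF R] by simp
      ultimately show "(lcm_div G (H - pf) - D) R \<le> A R" by (simp add: lcm_div_def A_def)
    qed
  qed
  have ev0: "ev_D K Ps 0 = (\<lambda>_. 0)"
  proof
    fix R show "ev_D K Ps 0 R = 0"
    proof (cases "R \<in> Ps")
      case True
      interpret vring K R using place_vring Psr(1)[OF True] by blast
      have "eval_at K R 0 = 0" by (rule eval_at_char) (auto simp: K_0 P_0)
      then show ?thesis using True by (simp add: ev_D_def)
    qed (simp add: ev_D_def)
  qed
  have regular: "z \<in> R" if R: "R \<in> Ps" and z: "z \<in> Lspace K E" and E: "E R = 0" for z E R
  proof -
    interpret vring K R using place_vring Psr(1)[OF R] by blast
    show ?thesis
    proof (cases "z = 0")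
      case True then show ?thesis using R_0 by simp
    next
      case False
      then have "val R z \<ge> 0" using z E Psr(1)[OF R] by (auto simp: L_mem)
      then show ?thesis using v_R False by simp
    qed
  qed
  show ?thesis
  proof
    show "AG_code K Ps G \<inter> cw_mult_code (ev_D K Ps f) (AG_code K Ps H) \<subseteq> {\<lambda>_. 0}"
    proof
      fix v assume v: "v \<in> AG_code K Ps G \<inter> cw_mult_code (ev_D K Ps f) (AG_code K Ps H)"
      obtain g where g: "g \<in> Lspace K G" "v = ev_D K Ps g" using v by (auto simp: AG_code_def)
      obtain h where h: "h \<in> Lspace K H" "v = (\<lambda>i. ev_D K Ps f i * ev_D K Ps h i)"
        using v by (auto simp: AG_code_def cw_mult_code_def)
      define z where "z = g - f * h"
      have zP: "z \<in> place_ideal R" if R: "R \<in> Ps" for R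
      proof -
        interpret vring K R using place_vring Psr(1)[OF R] by blast
        have gR: "g \<in> R" "h \<in> R" "f \<in> R" using regular[OF R] g h fL zPs[OF R] by auto
        obtain cg where cg: "cg = eval_at K R g" "cg \<in> K" "g - cg \<in> P" using eval_in[OF Psr(2)[OF R] gR(1)] by blast
        obtain ch where ch: "ch = eval_at K R h" "ch \<in> K" "h - ch \<in> P" using eval_in[OF Psr(2)[OF R] gR(2)] by blast
        obtain cf where cf: "cf = eval_at K R f" "cf \<in> K" "f - cf \<in> P" using eval_in[OF Psr(2)[OF R] gR(3)] by blast
        have "v R = cg" using g(2) R cg by (simp add: ev_D_def)
        moreover have "v R = cf * ch" using h(2) R cf ch by (simp add: ev_D_def)
        ultimately have c: "cg = cf * ch" by simp
        have "z = (g - cg) - ((f - cf) * h + cf * (h - ch))" unfolding z_def c by (simp add: algebra_simps)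
        moreover have "(f - cf) * h \<in> P" using PR_mult cf gR by blast
        moreover have "cf * (h - ch) \<in> P" using RP_mult cf ch K_R by blast
        ultimately show ?thesis using P_diff P_add cg by metis
      qed
      have zL: "z \<in> Lspace K (lcm_div G (H - pf) - D)" unfolding L_mem
      proof (cases "z = 0")
        case False
        have "val R z + (lcm_div G (H - pf) - D) R \<ge> 0" if R: "R \<in> places K" for R
        proof -
          interpret vring K R using place_vring R by blast
          show ?thesis
          proof (cases "R \<in> Ps")
            case True
            then have "val R z \<ge> 1" using zP v_P False by blast
            then show ?thesis using True zPs[OF True] by (simp add: lcm_div_def Dv)
          next
            case nP: False
            define k where "k = - max (G R) (H R - val R f)"
            have "val R (g + (- (f * h))) \<ge> k"
            proof (rule v_add_ge)
              show "g + - (f * h) \<noteq> 0" using False by (simp add: z_def)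
              show "g = 0 \<or> k \<le> val R g" using g R by (auto simp: L_mem k_def)
              show "- (f * h) = 0 \<or> k \<le> val R (- (f * h))"
              proof (cases "h = 0")
                case False
                have "val R (- (f * h)) = val R f + val R h" using v_uminus v_mult[OF fnz False] by simp
                moreover have "val R h + H R \<ge> 0" using h R False by (auto simp: L_mem)
                ultimately have "k \<le> val R (- (f * h))" by (simp add: k_def)
                then show ?thesis by blast
              qed simp
            qed
            then show ?thesis using nP R by (simp add: z_def lcm_div_def Dv k_def pfv)
          qed
        qed
        then show "z = 0 \<or> (\<forall>R\<in>places K. val R z + (lcm_div G (H - pf) - D) R \<ge> 0)" by blast
      qed simp
      then have "z = 0" using L2 by blast
      then have gfh: "g = f * h" by (simp add: z_def)
      have "g \<in> Lspace K (gcd_div G (H - pf))" unfolding L_mem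
      proof (cases "g = 0")
        case False
        then have hnz: "h \<noteq> 0" using gfh by auto
        have "val R g + gcd_div G (H - pf) R \<ge> 0" if R: "R \<in> places K" for R
        proof -
          interpret vring K R using place_vring R by blast
          have "val R g = val R f + val R h" using gfh v_mult[OF fnz hnz] by simp
          moreover have "val R g + G R \<ge> 0" using g R False by (auto simp: L_mem)
          moreover have "val R h + H R \<ge> 0" using h R hnz by (auto simp: L_mem)
          ultimately show ?thesis using R by (simp add: gcd_div_def pfv)
        qed
        then show "g = 0 \<or> (\<forall>R\<in>places K. val R g + gcd_div G (H - pf) R \<ge> 0)" by blast
      qed simp
      then have "g = 0" using L1 by blast
      then show "v \<in> {\<lambda>_. 0}" using g(2) ev0 by simp
    qed
    show "{\<lambda>_. 0} \<subseteq> AG_code K Ps G \<inter> cw_mult_code (ev_D K Ps f) (AG_code K Ps H)"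
    proof -
      have a: "(\<lambda>_. 0) \<in> AG_code K Ps E" for E
      proof -
        have "ev_D K Ps 0 \<in> ev_D K Ps ` Lspace K E" by (rule imageI[OF L_0])
        then show ?thesis using ev0 by (simp add: AG_code_def)
      qed
      have "(\<lambda>c. \<lambda>i. ev_D K Ps f i * c i) (\<lambda>_. 0) \<in> (\<lambda>c. \<lambda>i. ev_D K Ps f i * c i) ` AG_code K Ps H"
        by (rule imageI[OF a])
      then have "(\<lambda>_. 0) \<in> cw_mult_code (ev_D K Ps f) (AG_code K Ps H)"
        by (simp add: cw_mult_code_def)
      then show ?thesis using a[of G] by simp
    qed
  qed
qed


end
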